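(* Let $A$ be a commutative ring. The assignment $\epsilon(a)\mapsto w_{21}(-1)x_{21}(a)$ ($a\in A$) induces a well-defined group isomorphism $\gamma:C(A)\to\mathrm{St}(2,A)/C(2,A)$. Furthermore, the restriction of $\gamma$ to $U(A)$ induces an isomorphism $U(A)\cong K_2(2,A)/C(2,A)$.
   Context: $C(A)$ is the group with generators $\epsilon(a)$, $a\in A$, and relations: with $h(u):=\epsilon(-u)\epsilon(-u^{-1})\epsilon(-u)$ for $u\in A^\times$, (1) $h(u)h(v)=h(uv)$; (2) $\epsilon(a)\epsilon(0)\epsilon(b)=h(-1)\epsilon(a+b)$; (3) $h(u)\epsilon(a)h(u)=\epsilon(u^2a)$. $U(A)$ is the kernel of the homomorphism $C(A)\to\mathrm{SL}_2(A)$, $\epsilon(a)\mapsto\begin{pmatrix}a&1\\-1&0\end{pmatrix}$. $\mathrm{St}(2,A)$ is the group generated by $x_{12}(t),x_{21}(t)$, $t\in A$, with relations $x_{ij}(s)x_{ij}(t)=x_{ij}(s+t)$ and $w_{ij}(u)x_{ij}(t)w_{ij}(-u)=x_{ji}(-u^{-2}t)$ ($u\in A^\times$), where $w_{ij}(u):=x_{ij}(u)x_{ji}(-u^{-1})x_{ij}(u)$. $\phi:\mathrm{St}(2,A)\to\mathrm{SL}_2(A)$ sends $x_{12}(t)\mapsto\begin{pmatrix}1&t\\0&1\end{pmatrix}$, $x_{21}(t)\mapsto\begin{pmatrix}1&0\\t&1\end{pmatrix}$, and $K_2(2,A)=\ker\phi$. With $h_{12}(u)=w_{12}(u)w_{12}(-1)$,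 the symbols $c(u,v)=h_{12}(u)h_{12}(v)h_{12}(uv)^{-1}$ ($u,v\in A^\times$) are central in $\mathrm{St}(2,A)$, and $C(2,A)$ is the subgroup they generate. *)

theory Defs
  imports "HOL-Algebra.Algebra"
begin

text \<open>Words in generators of type 'g: a letter (x, True) is x, (x, False) is x inverse.\<close>
type_synonym 'g word = "('g \<times> bool) list"

definition gen :: "'g \<Rightarrow> 'g word" where
  "gen x = [(x, True)]"

definition inv_word :: "'g word \<Rightarrow> 'g word" where
  "inv_word w = rev (map (\<lambda>(x, b). (x, \<not> b)) w)"

text \<open>The congruence on words generated by free cancellation and the relations R
  (each relation is a pair of words (l, r) meaning l = r).\<close>
inductive pres_eq :: "('g word \<times> 'g word) set \<Rightarrow> 'g word \<Rightarrow> 'g word \<Rightarrow> bool"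
  for R where
  pe_refl: "pres_eq R w w"
| pe_sym: "pres_eq R u v \<Longrightarrow> pres_eq R v u"
| pe_trans: "pres_eq R u v \<Longrightarrow> pres_eq R v w \<Longrightarrow> pres_eq R u w"
| pe_cancel: "pres_eq R [(x, b), (x, \<not> b)] []"
| pe_rel: "(l, r) \<in> R \<Longrightarrow> pres_eq R l r"
| pe_cong: "pres_eq R u u' \<Longrightarrow> pres_eq R v v' \<Longrightarrow> pres_eq R (u @ v) (u' @ v')"

definition pres_class :: "('g word \<times> 'g word) set \<Rightarrow> 'g word \<Rightarrow> 'g word set" where
  "pres_class R w = {v. pres_eq R v w}"

definition pres_mult :: "('g word \<times> 'g word) set \<Rightarrow> 'g word set \<Rightarrow> 'g word set \<Rightarrow> 'g word set" where
  "pres_mult R P Q = pres_class R ((SOME u. u \<in> P) @ (SOME v. v \<in> Q))"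

definition presented_group :: "('g word \<times> 'g word) set \<Rightarrow> ('g word set) monoid" where
  "presented_group R = \<lparr> carrier = range (pres_class R),
     Group.monoid.mult = pres_mult R,
     one = pres_class R [] \<rparr>"

definition eval_word :: "('b, 'c) monoid_scheme \<Rightarrow> ('g \<Rightarrow> 'b) \<Rightarrow> 'g word \<Rightarrow> 'b" where
  "eval_word G f w = foldr (\<lambda>(x, b) acc. Group.monoid.mult G (if b then f x else m_inv G (f x)) acc) w (Group.monoid.one G)"

definition pres_map :: "('b, 'c) monoid_scheme \<Rightarrow> ('g \<Rightarrow> 'b) \<Rightarrow> 'g word set \<Rightarrow> 'b" where
  "pres_map G f P = eval_word G f (SOME w. w \<in> P)"

text \<open>A 2x2 matrix (a b; c d) is represented as the tuple (a, b, c, d).\<close>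
definition SL2 :: "('a::comm_ring_1 \<times> 'a \<times> 'a \<times> 'a) monoid" where
  "SL2 = \<lparr> carrier = {(a, b, c, d). a * d - b * c = 1},
     Group.monoid.mult = (\<lambda>(a, b, c, d) (e, f, g, h).
        (a * e + b * g, a * f + b * h, c * e + d * g, c * f + d * h)),
     one = (1, 0, 0, 1) \<rparr>"

definition rinv :: "'a::comm_ring_1 \<Rightarrow> 'a" where
  "rinv u = (SOME v. u * v = 1)"

definition h_word :: "'a::comm_ring_1 \<Rightarrow> 'a word" where
  "h_word u = gen (- u) @ gen (- rinv u) @ gen (- u)"

definition CA_rels :: "('a::comm_ring_1 word \<times> 'a word) set" where
  "CA_rels =
     {(h_word u @ h_word v, h_word (u * v)) | u v. u dvd 1 \<and> v dvd 1}
   \<union> {(gen a @ gen 0 @ gen b, h_word (- 1) @ gen (a + b)) | a b. True}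
   \<union> {(h_word u @ gen a @ h_word u, gen (u ^ 2 * a)) | u a. u dvd 1}"

definition CA :: "('a::comm_ring_1 word set) monoid" where
  "CA = presented_group CA_rels"

definition eps_mat :: "'a::comm_ring_1 \<Rightarrow> 'a \<times> 'a \<times> 'a \<times> 'a" where
  "eps_mat a = (a, 1, - 1, 0)"

definition UA :: "('a::comm_ring_1 word set) set" where
  "UA = {P \<in> carrier CA. pres_map SL2 eps_mat P = \<one>\<^bsub>SL2\<^esub>}"

datatype 'a st_gen = X12 'a | X21 'a

text \<open>x i t: for i = True this is x_12(t), for i = False it is x_21(t);
  x (\<not> i) t is then x_ji(t).\<close>
fun xg :: "bool \<Rightarrow> 'a \<Rightarrow> 'a st_gen" where
  "xg True t = X12 t"
| "xg False t = X21 t"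

definition w_word :: "bool \<Rightarrow> 'a::comm_ring_1 \<Rightarrow> 'a st_gen word" where
  "w_word i u = gen (xg i u) @ gen (xg (\<not> i) (- rinv u)) @ gen (xg i u)"

definition St_rels :: "('a::comm_ring_1 st_gen word \<times> 'a st_gen word) set" where
  "St_rels =
     {(gen (xg i s) @ gen (xg i t), gen (xg i (s + t))) | i s t. True}
   \<union> {(w_word i u @ gen (xg i t) @ w_word i (- u), gen (xg (\<not> i) (- (rinv u ^ 2 * t))))
        | i u t. u dvd 1}"

definition St :: "('a::comm_ring_1 st_gen word set) monoid" where
  "St = presented_group St_rels"

fun phi_gen :: "'a::comm_ring_1 st_gen \<Rightarrow> 'a \<times> 'a \<times> 'a \<times> 'a" where
  "phi_gen (X12 t) = (1, t, 0, 1)"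
| "phi_gen (X21 t) = (1, 0, t, 1)"

definition K2 :: "('a::comm_ring_1 st_gen word set) set" where
  "K2 = {P \<in> carrier St. pres_map SL2 phi_gen P = \<one>\<^bsub>SL2\<^esub>}"

definition h12_word :: "'a::comm_ring_1 \<Rightarrow> 'a st_gen word" where
  "h12_word u = w_word True u @ w_word True (- 1)"

definition c_word :: "'a::comm_ring_1 \<Rightarrow> 'a \<Rightarrow> 'a st_gen word" where
  "c_word u v = h12_word u @ h12_word v @ inv_word (h12_word (u * v))"

definition C2 :: "('a::comm_ring_1 st_gen word set) set" where
  "C2 = generate St {pres_class St_rels (c_word u v) | u v. u dvd 1 \<and> v dvd 1}"

end

theory Submission
  imports Defs
begin

lemma pres_eq_class_iff: "pres_class R u = pres_class R v \<longleftrightarrow> pres_eq R u v"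
proof
  assume "pres_class R u = pres_class R v"
  then have "u \<in> pres_class R v" unfolding pres_class_def using pe_refl by blast
  then show "pres_eq R u v" unfolding pres_class_def by simp
next
  assume uv: "pres_eq R u v"
  show "pres_class R u = pres_class R v"
    unfolding pres_class_def using pe_trans[OF _ uv] pe_trans[OF _ pe_sym[OF uv]] by blast
qed

lemma in_pres_class: "w \<in> pres_class R w"
  unfolding pres_class_def by (auto intro: pe_refl)

lemma some_pres_class: "pres_eq R (SOME v. v \<in> pres_class R w) w"
  using someI[of "\<lambda>v. v \<in> pres_class R w", OF in_pres_class] unfolding pres_class_def by auto

lemma pres_mult_class: "pres_mult R (pres_class R u) (pres_class R v) = pres_class R (u @ v)"
  unfolding pres_mult_def pres_eq_class_iff
  by (intro pe_cong some_pres_class)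

lemma pres_eq_inv_r: "pres_eq R (w @ inv_word w) []"
proof (induction w)
  case Nil then show ?case by (simp add: inv_word_def pe_refl)
next
  case (Cons a w)
  obtain x b where a: "a = (x, b)" by force
  have "inv_word (a # w) = inv_word w @ [(x, \<not> b)]" by (simp add: inv_word_def a)
  then have e: "(a # w) @ inv_word (a # w) = [a] @ (w @ inv_word w) @ [(x, \<not> b)]" by simp
  have h1: "pres_eq R ([a] @ (w @ inv_word w) @ [(x, \<not> b)]) ([a] @ [] @ [(x, \<not> b)])"
    by (intro pe_cong pe_refl Cons)
  have h2: "pres_eq R ([a] @ [] @ [(x, \<not> b)]) []" using pe_cancel[of R x b] by (simp add: a)
  show ?case unfolding e by (rule pe_trans[OF h1 h2])
qed

lemma inv_word_inv[simp]: "inv_word (inv_word w) = w"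
  by (induction w) (auto simp: inv_word_def)

lemma pres_eq_inv_l: "pres_eq R (inv_word w @ w) []"
  using pres_eq_inv_r[of R "inv_word w"] by simp

lemma group_presented: "group (presented_group R)"
proof (rule groupI)
  show "\<And>x y. x \<in> carrier (presented_group R) \<Longrightarrow> y \<in> carrier (presented_group R) \<Longrightarrow>
    x \<otimes>\<^bsub>presented_group R\<^esub> y \<in> carrier (presented_group R)"
    by (auto simp: presented_group_def pres_mult_class)
  show "\<one>\<^bsub>presented_group R\<^esub> \<in> carrier (presented_group R)"
    by (simp add: presented_group_def)
  show "\<And>x y z. x \<in> carrier (presented_group R) \<Longrightarrow> y \<in> carrier (presented_group R) \<Longrightarrow>
    z \<in> carrier (presented_group R) \<Longrightarrow>
    x \<otimes>\<^bsub>presented_group R\<^esub> y \<otimes>\<^bsub>presented_group R\<^esub> z =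
    x \<otimes>\<^bsub>presented_group R\<^esub> (y \<otimes>\<^bsub>presented_group R\<^esub> z)"
    by (auto simp: presented_group_def pres_mult_class)
  show "\<And>x. x \<in> carrier (presented_group R) \<Longrightarrow> \<one>\<^bsub>presented_group R\<^esub> \<otimes>\<^bsub>presented_group R\<^esub> x = x"
    by (auto simp: presented_group_def pres_mult_class)
  show "\<And>x. x \<in> carrier (presented_group R) \<Longrightarrow>
    \<exists>y\<in>carrier (presented_group R). y \<otimes>\<^bsub>presented_group R\<^esub> x = \<one>\<^bsub>presented_group R\<^esub>"
  proof -
    fix x assume "x \<in> carrier (presented_group R)"
    then obtain w where x: "x = pres_class R w" by (auto simp: presented_group_def)
    show "\<exists>y\<in>carrier (presented_group R). y \<otimes>\<^bsub>presented_group R\<^esub> x = \<one>\<^bsub>presented_group R\<^esub>"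
      by (rule bexI[of _ "pres_class R (inv_word w)"])
        (auto simp: presented_group_def pres_mult_class x pres_eq_class_iff pres_eq_inv_l)
  qed
qed

lemma pres_class_carrier[simp]: "pres_class R w \<in> carrier (presented_group R)"
  by (simp add: presented_group_def)

lemma pres_mult': "pres_class R u \<otimes>\<^bsub>presented_group R\<^esub> pres_class R v = pres_class R (u @ v)"
  by (simp add: presented_group_def pres_mult_class)

lemma pres_one': "\<one>\<^bsub>presented_group R\<^esub> = pres_class R []"
  by (simp add: presented_group_def)

lemma pres_inv': "inv\<^bsub>presented_group R\<^esub> pres_class R w = pres_class R (inv_word w)"
proof -
  interpret group "presented_group R" by (rule group_presented)
  show ?thesis
    by (rule inv_equality) (auto simp: pres_mult' pres_one' pres_eq_class_iff pres_eq_inv_l)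
qed

lemma pres_carrier_cases: "P \<in> carrier (presented_group R) \<Longrightarrow> \<exists>w. P = pres_class R w"
  by (auto simp: presented_group_def)

lemma pres_rel': "(l, r) \<in> R \<Longrightarrow> pres_class R l = pres_class R r"
  by (simp add: pres_eq_class_iff pe_rel)

section \<open>Evaluation\<close>

context group
begin

lemma inv_cancel_l[simp]: "x \<in> carrier G \<Longrightarrow> y \<in> carrier G \<Longrightarrow> x \<otimes> (inv x \<otimes> y) = y"
  by (simp add: m_assoc[symmetric])

lemma inv_cancel_l2[simp]: "x \<in> carrier G \<Longrightarrow> y \<in> carrier G \<Longrightarrow> inv x \<otimes> (x \<otimes> y) = y"
  by (simp add: m_assoc[symmetric])

lemma conj_swap: "x \<in> carrier G \<Longrightarrow> a \<in> carrier G \<Longrightarrow> b \<in> carrier G \<Longrightarrow>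
  inv x \<otimes> a = b \<otimes> inv x \<Longrightarrow> x \<otimes> b = a \<otimes> x"
proof -
  assume c: "x \<in> carrier G" "a \<in> carrier G" "b \<in> carrier G" and e: "inv x \<otimes> a = b \<otimes> inv x"
  have "x \<otimes> (inv x \<otimes> a) \<otimes> x = x \<otimes> (b \<otimes> inv x) \<otimes> x" using e by simp
  then show ?thesis using c by (simp add: m_assoc)
qed

lemma conj_comm: "a \<in> carrier G \<Longrightarrow> b \<in> carrier G \<Longrightarrow> a \<otimes> b \<otimes> inv a = c \<Longrightarrow> a \<otimes> b = c \<otimes> a"
proof -
  assume a: "a \<in> carrier G" "b \<in> carrier G" and e: "a \<otimes> b \<otimes> inv a = c"
  have "c \<otimes> a = a \<otimes> b \<otimes> inv a \<otimes> a" using e by simp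
  then show ?thesis using a by (simp add: m_assoc)
qed

lemma eval_word_closed: "(\<And>x. f x \<in> carrier G) \<Longrightarrow> eval_word G f w \<in> carrier G"
  by (induction w) (auto simp: eval_word_def)

lemma eval_word_Nil[simp]: "eval_word G f [] = \<one>"
  by (simp add: eval_word_def)

lemma eval_word_Cons: "eval_word G f ((x, b) # w) = (if b then f x else inv (f x)) \<otimes> eval_word G f w"
  by (simp add: eval_word_def)

lemma eval_word_append: "(\<And>x. f x \<in> carrier G) \<Longrightarrow>
  eval_word G f (u @ v) = eval_word G f u \<otimes> eval_word G f v"
proof (induction u)
  case Nil then show ?case by (simp add: eval_word_closed)
next
  case (Cons a u)
  obtain x b where a: "a = (x, b)" by force
  show ?case using Cons by (simp add: a eval_word_Cons m_assoc eval_word_closed)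
qed

lemma eval_word_gen[simp]: "(\<And>x. f x \<in> carrier G) \<Longrightarrow> eval_word G f (gen x) = f x"
  by (simp add: gen_def eval_word_Cons)

lemma eval_word_inv: "(\<And>x. f x \<in> carrier G) \<Longrightarrow> eval_word G f (inv_word w) = inv (eval_word G f w)"
proof (induction w)
  case Nil then show ?case by (simp add: inv_word_def)
next
  case (Cons a w)
  obtain x b where a: "a = (x, b)" by force
  have iw: "inv_word ((x, b) # w) = inv_word w @ [(x, \<not> b)]" by (simp add: inv_word_def)
  show ?case using Cons unfolding a iw
    by (cases b) (simp_all add: eval_word_append eval_word_Cons eval_word_closed inv_mult_group)
qed

lemma eval_respects:
  assumes f: "\<And>x. f x \<in> carrier G"
    and R: "\<And>l r. (l, r) \<in> R \<Longrightarrow> eval_word G f l = eval_word G f r"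
    and "pres_eq R u v"
  shows "eval_word G f u = eval_word G f v"
  using assms(3)
proof (induction rule: pres_eq.induct)
  case (pe_cancel x b)
  then show ?case using f by (simp add: eval_word_Cons)
next
  case (pe_rel l r) then show ?case by (rule R)
next
  case (pe_cong u u' v v') then show ?case by (simp add: eval_word_append f)
qed auto

lemma pres_map_class:
  assumes f: "\<And>x. f x \<in> carrier G"
    and R: "\<And>l r. (l, r) \<in> R \<Longrightarrow> eval_word G f l = eval_word G f r"
  shows "pres_map G f (pres_class R w) = eval_word G f w"
  unfolding pres_map_def by (rule eval_respects[OF f R some_pres_class])

lemma pres_map_hom:
  assumes f: "\<And>x. f x \<in> carrier G"
    and R: "\<And>l r. (l, r) \<in> R \<Longrightarrow> eval_word G f l = eval_word G f r"
  shows "pres_map G f \<in> hom (presented_group R) G"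
proof (rule homI)
  fix P assume "P \<in> carrier (presented_group R)"
  then obtain w where "P = pres_class R w" using pres_carrier_cases by blast
  then show "pres_map G f P \<in> carrier G" by (simp add: pres_map_class[OF f R] eval_word_closed f)
next
  fix P Q assume "P \<in> carrier (presented_group R)" "Q \<in> carrier (presented_group R)"
  then obtain u v where "P = pres_class R u" "Q = pres_class R v" using pres_carrier_cases by blast
  then show "pres_map G f (P \<otimes>\<^bsub>presented_group R\<^esub> Q) = pres_map G f P \<otimes> pres_map G f Q"
    by (simp add: pres_mult' pres_map_class[OF f R] eval_word_append f)
qed

lemma hom_pres_eval:
  assumes h: "h \<in> hom (presented_group R) G"
  shows "h (pres_class R w) = eval_word G (\<lambda>x. h (pres_class R (gen x))) w"
proof -
  interpret F: group "presented_group R" by (rule group_presented)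
  interpret group_hom "presented_group R" G h
    using h by (simp add: group_hom_def group_hom_axioms_def F.group_axioms group_axioms)
  show ?thesis
  proof (induction w)
    case Nil
    have "h (pres_class R []) = \<one>" using hom_one pres_one'[of R] by simp
    then show ?case by simp
  next
    case (Cons a w)
    obtain x b where a: "a = (x, b)" by force
    have s: "pres_class R ((x,b) # w) = pres_class R [(x,b)] \<otimes>\<^bsub>presented_group R\<^esub> pres_class R w"
      by (simp add: pres_mult')
    have t0: "pres_class R [(x, False)] = inv\<^bsub>presented_group R\<^esub> pres_class R (gen x)"
      by (simp add: pres_inv' inv_word_def gen_def)
    have t1: "pres_class R [(x, True)] = pres_class R (gen x)"
      by (simp add: gen_def)
    have "h (pres_class R ((x,b) # w)) = h (pres_class R [(x,b)]) \<otimes> h (pres_class R w)"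
      unfolding s by (rule hom_mult) simp_all
    also have "h (pres_class R [(x,b)]) = (if b then h (pres_class R (gen x)) else inv h (pres_class R (gen x)))"
      by (cases b) (simp_all only: t0 t1 hom_inv pres_class_carrier if_True if_False)
    finally show ?case using Cons by (simp add: a eval_word_Cons)
  qed
qed

lemma pres_map_eq_hom:
  assumes h: "h \<in> hom (presented_group R) G"
    and f: "\<And>x. f x = h (pres_class R (gen x))"
    and P: "P \<in> carrier (presented_group R)"
  shows "pres_map G f P = h P"
proof -
  have ff: "f = (\<lambda>x. h (pres_class R (gen x)))" using f by auto
  obtain w0 where w0: "P = pres_class R w0" using P pres_carrier_cases by blast
  have eqP: "pres_class R (SOME w. w \<in> P) = P"
    unfolding w0 pres_eq_class_iff by (rule some_pres_class)
  have "h (pres_class R (SOME w. w \<in> P)) = eval_word G f (SOME w. w \<in> P)"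
    unfolding ff by (rule hom_pres_eval[OF h])
  then show ?thesis unfolding pres_map_def eqP by simp
qed

lemma hom_pres_unique:
  assumes h: "h \<in> hom (presented_group R) G" and k: "k \<in> hom (presented_group R) G"
    and e: "\<And>x. h (pres_class R (gen x)) = k (pres_class R (gen x))"
    and P: "P \<in> carrier (presented_group R)"
  shows "h P = k P"
proof -
  obtain w where w: "P = pres_class R w" using P pres_carrier_cases by blast
  have "(\<lambda>x. h (pres_class R (gen x))) = (\<lambda>x. k (pres_class R (gen x)))" using e by auto
  then show ?thesis unfolding w hom_pres_eval[OF h, of w] hom_pres_eval[OF k, of w] by simp
qed

end


section \<open>Inverses of units\<close>

lemma rinv_unique: "(u::'a::comm_ring_1) * v = 1 \<Longrightarrow> rinv u = v"
proof -
  assume uv: "u * v = 1"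
  have h: "u * rinv u = 1" unfolding rinv_def using someI[of "\<lambda>v. u * v = 1" v] uv by blast
  have "rinv u = (u * v) * rinv u" using uv by simp
  also have "\<dots> = v * (u * rinv u)" by (simp add: mult_ac)
  also have "\<dots> = v" using h by simp
  finally show ?thesis .
qed

lemma rinv_r[simp]: "(u::'a::comm_ring_1) dvd 1 \<Longrightarrow> u * rinv u = 1"
proof -
  assume "u dvd 1"
  then obtain k where k: "1 = u * k" by (rule dvdE)
  then have "rinv u = k" by (intro rinv_unique) simp
  then show ?thesis using k by simp
qed

lemma rinv_l[simp]: "(u::'a::comm_ring_1) dvd 1 \<Longrightarrow> rinv u * u = 1"
  using rinv_r[of u] by (simp add: mult.commute)

lemma rinv_unit[simp]: "(u::'a::comm_ring_1) dvd 1 \<Longrightarrow> rinv u dvd 1"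
proof -
  assume "u dvd 1"
  then have "1 = rinv u * u" by simp
  then show ?thesis by (rule dvdI)
qed

lemma rinv_one[simp]: "rinv (1::'a::comm_ring_1) = 1"
  by (rule rinv_unique) simp

lemma rinv_m1[simp]: "rinv (-1::'a::comm_ring_1) = -1"
  by (rule rinv_unique) simp

lemma rinv_neg: "(u::'a::comm_ring_1) dvd 1 \<Longrightarrow> rinv (- u) = - rinv u"
  by (rule rinv_unique) simp

lemma rinv_rinv[simp]: "(u::'a::comm_ring_1) dvd 1 \<Longrightarrow> rinv (rinv u) = u"
  by (rule rinv_unique) simp

lemma rinv_mult: "(u::'a::comm_ring_1) dvd 1 \<Longrightarrow> v dvd 1 \<Longrightarrow> rinv (u * v) = rinv u * rinv v"
proof (rule rinv_unique)
  assume "u dvd 1" "v dvd 1"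
  then have h: "u * rinv u = 1" "v * rinv v = 1" by simp_all
  have "u * v * (rinv u * rinv v) = (u * rinv u) * (v * rinv v)" by (simp add: mult_ac)
  then show "u * v * (rinv u * rinv v) = 1" using h by simp
qed

lemma neg_unit[simp]: "(u::'a::comm_ring_1) dvd 1 \<Longrightarrow> - u dvd 1"
  by simp

lemma rinv_sq_mult: "(u::'a::comm_ring_1) dvd 1 \<Longrightarrow> rinv u ^ 2 * (u ^ 2 * s) = s"
proof -
  assume "u dvd 1"
  then have "u * rinv u = 1" by simp
  then have "rinv u ^ 2 * (u ^ 2 * s) = (u * rinv u) ^ 2 * s" by (simp add: power2_eq_square algebra_simps)
  then show ?thesis using \<open>u * rinv u = 1\<close> by simp
qed

lemma sq_rinv_mult: "(u::'a::comm_ring_1) dvd 1 \<Longrightarrow> u ^ 2 * (rinv u ^ 2 * s) = s"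
  using rinv_sq_mult[of "rinv u" s] by simp

section \<open>Steinberg-type generators in an arbitrary group\<close>

definition Wg :: "('b, 'c) monoid_scheme \<Rightarrow> ('a::comm_ring_1 st_gen \<Rightarrow> 'b) \<Rightarrow> bool \<Rightarrow> 'a \<Rightarrow> 'b" where
  "Wg G f i u = f (xg i u) \<otimes>\<^bsub>G\<^esub> f (xg (\<not> i) (- rinv u)) \<otimes>\<^bsub>G\<^esub> f (xg i u)"

definition Hg :: "('b, 'c) monoid_scheme \<Rightarrow> ('a::comm_ring_1 st_gen \<Rightarrow> 'b) \<Rightarrow> bool \<Rightarrow> 'a \<Rightarrow> 'b" where
  "Hg G f i u = Wg G f i u \<otimes>\<^bsub>G\<^esub> Wg G f i (- 1)"

locale st_grp = group G for G (structure) +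
  fixes f :: "'r::comm_ring_1 st_gen \<Rightarrow> 'a"
  assumes f_closed[simp]: "f g \<in> carrier G"
    and f_add: "f (xg i s) \<otimes> f (xg i t) = f (xg i (s + t))"
    and f_w: "u dvd 1 \<Longrightarrow> Wg G f i u \<otimes> f (xg i t) \<otimes> Wg G f i (- u) = f (xg (\<not> i) (- (rinv u ^ 2 * t)))"
begin

lemma W_closed[simp]: "Wg G f i u \<in> carrier G"
  by (simp add: Wg_def)

lemma H_closed[simp]: "Hg G f i u \<in> carrier G"
  by (simp add: Hg_def)

lemma f_add_r: "r \<in> carrier G \<Longrightarrow> f (xg i s) \<otimes> (f (xg i t) \<otimes> r) = f (xg i (s + t)) \<otimes> r"
  by (simp add: m_assoc[symmetric] f_add)

lemma f_zero[simp]: "f (xg i 0) = \<one>"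
proof -
  have "f (xg i 0) \<otimes> f (xg i 0) = f (xg i 0) \<otimes> \<one>" by (simp add: f_add)
  then show ?thesis by (metis f_closed l_cancel one_closed)
qed

lemma f_neg: "f (xg i (- s)) = inv f (xg i s)"
proof -
  have "f (xg i (- s)) \<otimes> f (xg i s) = \<one>" by (simp add: f_add)
  then show ?thesis by (metis f_closed inv_equality)
qed

lemma W_neg: "u dvd 1 \<Longrightarrow> Wg G f i (- u) = inv Wg G f i u"
proof -
  assume u: "u dvd 1"
  have "Wg G f i (- u) \<otimes> Wg G f i u = \<one>"
    unfolding Wg_def using u by (simp add: m_assoc f_add_r f_add rinv_neg)
  then show ?thesis by (metis W_closed inv_equality)
qed

lemma C1: "u dvd 1 \<Longrightarrow> Wg G f i u \<otimes> f (xg i t) = f (xg (\<not> i) (- (rinv u ^ 2 * t))) \<otimes> Wg G f i u"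
proof -
  assume u: "u dvd 1"
  have "Wg G f i u \<otimes> f (xg i t) \<otimes> inv Wg G f i u = f (xg (\<not> i) (- (rinv u ^ 2 * t)))"
    using f_w[OF u] W_neg[OF u] by simp
  then show ?thesis by (rule conj_comm[rotated 2]) simp_all
qed

lemma C2: "u dvd 1 \<Longrightarrow> Wg G f i u \<otimes> f (xg (\<not> i) s) = f (xg i (- (u ^ 2 * s))) \<otimes> Wg G f i u"
proof -
  assume u: "u dvd 1"
  have "Wg G f i (- u) \<otimes> f (xg i (- (u ^ 2 * s))) = f (xg (\<not> i) (- (rinv (- u) ^ 2 * (- (u ^ 2 * s))))) \<otimes> Wg G f i (- u)"
    using C1[of "- u" i] u by simp
  also have "rinv (- u) ^ 2 * (- (u ^ 2 * s)) = - s"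
    using u rinv_sq_mult[OF u, of s] by (simp add: rinv_neg)
  finally have e: "inv Wg G f i u \<otimes> f (xg i (- (u ^ 2 * s))) = f (xg (\<not> i) s) \<otimes> inv Wg G f i u"
    using W_neg[OF u] by simp
  show ?thesis by (rule conj_swap[OF _ _ _ e]) simp_all
qed

lemma C1r: "u dvd 1 \<Longrightarrow> r \<in> carrier G \<Longrightarrow> Wg G f i u \<otimes> (f (xg i t) \<otimes> r) = f (xg (\<not> i) (- (rinv u ^ 2 * t))) \<otimes> (Wg G f i u \<otimes> r)"
  by (simp add: m_assoc[symmetric] C1)

lemma C2r: "u dvd 1 \<Longrightarrow> r \<in> carrier G \<Longrightarrow> Wg G f i u \<otimes> (f (xg (\<not> i) s) \<otimes> r) = f (xg i (- (u ^ 2 * s))) \<otimes> (Wg G f i u \<otimes> r)"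
  by (simp add: m_assoc[symmetric] C2)

lemma H_conj1: "u dvd 1 \<Longrightarrow> Hg G f i u \<otimes> f (xg i t) = f (xg i (u ^ 2 * t)) \<otimes> Hg G f i u"
proof -
  assume u: "u dvd 1"
  have m1: "(-1::'r) dvd 1" by simp
  have "Hg G f i u \<otimes> f (xg i t) = Wg G f i u \<otimes> (Wg G f i (- 1) \<otimes> f (xg i t))"
    by (simp add: Hg_def m_assoc)
  also have "\<dots> = Wg G f i u \<otimes> (f (xg (\<not> i) (- t)) \<otimes> Wg G f i (- 1))"
    using C1[OF m1, of i t] by simp
  also have "\<dots> = f (xg i (u ^ 2 * t)) \<otimes> Hg G f i u"
    using C2r[OF u, of "Wg G f i (- 1)" i "- t"] by (simp add: Hg_def m_assoc)
  finally show ?thesis .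
qed

lemma H_conj2: "u dvd 1 \<Longrightarrow> Hg G f i u \<otimes> f (xg (\<not> i) t) = f (xg (\<not> i) (rinv u ^ 2 * t)) \<otimes> Hg G f i u"
proof -
  assume u: "u dvd 1"
  have m1: "(-1::'r) dvd 1" by simp
  have "Hg G f i u \<otimes> f (xg (\<not> i) t) = Wg G f i u \<otimes> (Wg G f i (- 1) \<otimes> f (xg (\<not> i) t))"
    by (simp add: Hg_def m_assoc)
  also have "\<dots> = Wg G f i u \<otimes> (f (xg i (- t)) \<otimes> Wg G f i (- 1))"
    using C2[OF m1, of i t] by simp
  also have "\<dots> = f (xg (\<not> i) (rinv u ^ 2 * t)) \<otimes> Hg G f i u"
    using C1r[OF u, of "Wg G f i (- 1)" i "- t"] by (simp add: Hg_def m_assoc)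
  finally show ?thesis .
qed

definition scales :: "'a \<Rightarrow> bool \<Rightarrow> 'r \<Rightarrow> bool" where
  "scales a j \<alpha> \<longleftrightarrow> (\<forall>t. a \<otimes> f (xg j t) = f (xg j (\<alpha> * t)) \<otimes> a)"

lemma scales_mult: "a \<in> carrier G \<Longrightarrow> b \<in> carrier G \<Longrightarrow> scales a j \<alpha> \<Longrightarrow> scales b j \<beta> \<Longrightarrow> scales (a \<otimes> b) j (\<alpha> * \<beta>)"
  unfolding scales_def
proof (intro allI)
  fix t assume a: "a \<in> carrier G" and b: "b \<in> carrier G"
    and sa: "\<forall>t. a \<otimes> f (xg j t) = f (xg j (\<alpha> * t)) \<otimes> a"
    and sb: "\<forall>t. b \<otimes> f (xg j t) = f (xg j (\<beta> * t)) \<otimes> b"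
  have "a \<otimes> b \<otimes> f (xg j t) = a \<otimes> (b \<otimes> f (xg j t))" using a b by (simp add: m_assoc)
  also have "\<dots> = (a \<otimes> f (xg j (\<beta> * t))) \<otimes> b" using sb a b by (simp add: m_assoc)
  also have "\<dots> = f (xg j (\<alpha> * \<beta> * t)) \<otimes> (a \<otimes> b)" using sa a b by (simp add: m_assoc mult.assoc)
  finally show "a \<otimes> b \<otimes> f (xg j t) = f (xg j (\<alpha> * \<beta> * t)) \<otimes> (a \<otimes> b)" .
qed

lemma scales_inv: "a \<in> carrier G \<Longrightarrow> \<alpha> dvd 1 \<Longrightarrow> scales a j \<alpha> \<Longrightarrow> scales (inv a) j (rinv \<alpha>)"
  unfolding scales_def
proof (intro allI)
  fix t assume a: "a \<in> carrier G" and al: "\<alpha> dvd 1" and s: "\<forall>t. a \<otimes> f (xg j t) = f (xg j (\<alpha> * t)) \<otimes> a"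
  have "a \<otimes> f (xg j (rinv \<alpha> * t)) = f (xg j t) \<otimes> a" using s al by (simp add: mult.assoc[symmetric])
  then have "inv (inv a) \<otimes> f (xg j (rinv \<alpha> * t)) = f (xg j t) \<otimes> inv (inv a)" using a by simp
  then show "inv a \<otimes> f (xg j t) = f (xg j (rinv \<alpha> * t)) \<otimes> inv a"
    by (rule conj_swap[rotated 3]) (simp_all add: a)
qed

lemma scales_one_comm: "scales a j 1 \<Longrightarrow> a \<otimes> f (xg j t) = f (xg j t) \<otimes> a"
  unfolding scales_def by simp

lemma c_comm_gen:
  assumes u: "u dvd 1" and v: "v dvd 1" and su: "scales (Hg G f i u) j \<alpha>" and sv: "scales (Hg G f i v) j \<beta>"
    and suv: "scales (Hg G f i (u * v)) j \<gamma>" and g: "\<gamma> dvd 1" and e: "\<alpha> * \<beta> * rinv \<gamma> = 1"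
  shows "(Hg G f i u \<otimes> Hg G f i v \<otimes> inv Hg G f i (u * v)) \<otimes> f (xg j t)
       = f (xg j t) \<otimes> (Hg G f i u \<otimes> Hg G f i v \<otimes> inv Hg G f i (u * v))"
proof -
  have "scales (Hg G f i u \<otimes> Hg G f i v \<otimes> inv Hg G f i (u * v)) j (\<alpha> * \<beta> * rinv \<gamma>)"
    by (intro scales_mult scales_inv su sv suv g m_closed H_closed inv_closed)
  then show ?thesis unfolding e by (rule scales_one_comm)
qed

lemma unitI: "(a::'r) * b = 1 \<Longrightarrow> a dvd 1"
  by (metis dvdI)

lemma unit_mult: "(u::'r) dvd 1 \<Longrightarrow> v dvd 1 \<Longrightarrow> u * v dvd 1"
  by (metis mult_dvd_mono mult_1_left)

lemma c_comm:
  assumes u: "u dvd 1" and v: "v dvd 1"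
  shows "(Hg G f i u \<otimes> Hg G f i v \<otimes> inv Hg G f i (u * v)) \<otimes> f (xg j t)
       = f (xg j t) \<otimes> (Hg G f i u \<otimes> Hg G f i v \<otimes> inv Hg G f i (u * v))"
proof -
  have uv: "u * v dvd 1" using u v by (rule unit_mult)
  have uu: "u * rinv u = 1" "v * rinv v = 1" using u v by simp_all
  have sc1: "\<And>w. w dvd 1 \<Longrightarrow> scales (Hg G f i w) i (w ^ 2)"
    unfolding scales_def using H_conj1 by blast
  have sc2: "\<And>w. w dvd 1 \<Longrightarrow> scales (Hg G f i w) (\<not> i) (rinv w ^ 2)"
    unfolding scales_def using H_conj2 by blast
  show ?thesis
  proof (cases "j = i")
    case True
    have p: "(u * v) ^ 2 * (rinv u * rinv v) ^ 2 = (u * rinv u) ^ 2 * (v * rinv v) ^ 2"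
      by (simp add: power2_eq_square mult_ac)
    have r: "rinv ((u * v) ^ 2) = (rinv u * rinv v) ^ 2" by (rule rinv_unique) (simp add: p uu)
    have g: "(u * v) ^ 2 dvd 1" by (rule unitI[of _ "(rinv u * rinv v) ^ 2"]) (simp add: p uu)
    have q: "u ^ 2 * v ^ 2 * (rinv u * rinv v) ^ 2 = (u * rinv u) ^ 2 * (v * rinv v) ^ 2"
      by (simp add: power2_eq_square mult_ac)
    have e: "u ^ 2 * v ^ 2 * rinv ((u * v) ^ 2) = 1"
      unfolding r q uu by simp
    show ?thesis unfolding True by (rule c_comm_gen[OF u v sc1[OF u] sc1[OF v] sc1[OF uv] g e])
  next
    case False
    then have j: "j = (\<not> i)" by auto
    have ruv: "rinv (u * v) = rinv u * rinv v" using u v by (rule rinv_mult)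
    have p: "(rinv u * rinv v) ^ 2 * (u * v) ^ 2 = (u * rinv u) ^ 2 * (v * rinv v) ^ 2"
      by (simp add: power2_eq_square mult_ac)
    have r: "rinv (rinv (u * v) ^ 2) = (u * v) ^ 2" unfolding ruv by (rule rinv_unique) (simp add: p uu)
    have g: "rinv (u * v) ^ 2 dvd 1" unfolding ruv by (rule unitI[of _ "(u * v) ^ 2"]) (simp add: p uu)
    have q: "rinv u ^ 2 * rinv v ^ 2 * (u * v) ^ 2 = (u * rinv u) ^ 2 * (v * rinv v) ^ 2"
      by (simp add: power2_eq_square mult_ac)
    have e: "rinv u ^ 2 * rinv v ^ 2 * rinv (rinv (u * v) ^ 2) = 1"
      unfolding r q uu by simp
    show ?thesis unfolding j by (rule c_comm_gen[OF u v sc2[OF u] sc2[OF v] sc2[OF uv] g e])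
  qed
qed

end


context st_grp
begin

lemma fX_add: "f (X21 s) \<otimes> f (X21 t) = f (X21 (s + t))"
  using f_add[of False s t] by simp
lemma fY_add: "f (X12 s) \<otimes> f (X12 t) = f (X12 (s + t))"
  using f_add[of True s t] by simp
lemma fX_add_r: "r \<in> carrier G \<Longrightarrow> f (X21 s) \<otimes> (f (X21 t) \<otimes> r) = f (X21 (s + t)) \<otimes> r"
  using f_add_r[of r False s t] by simp
lemma fY_add_r: "r \<in> carrier G \<Longrightarrow> f (X12 s) \<otimes> (f (X12 t) \<otimes> r) = f (X12 (s + t)) \<otimes> r"
  using f_add_r[of r True s t] by simp
lemma fX0[simp]: "f (X21 0) = \<one>"
  using f_zero[of False] by simp
lemma fY0[simp]: "f (X12 0) = \<one>"
  using f_zero[of True] by simp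

abbreviation "ww \<equiv> Wg G f False (- 1)"

lemma wX: "ww \<otimes> f (X21 t) = f (X12 (- t)) \<otimes> ww"
  using C1[of "- 1" False t] by simp
lemma wY: "ww \<otimes> f (X12 s) = f (X21 (- s)) \<otimes> ww"
  using C2[of "- 1" False s] by simp
lemma wX_r: "r \<in> carrier G \<Longrightarrow> ww \<otimes> (f (X21 t) \<otimes> r) = f (X12 (- t)) \<otimes> (ww \<otimes> r)"
  by (simp add: m_assoc[symmetric] wX)
lemma wY_r: "r \<in> carrier G \<Longrightarrow> ww \<otimes> (f (X12 s) \<otimes> r) = f (X21 (- s)) \<otimes> (ww \<otimes> r)"
  by (simp add: m_assoc[symmetric] wY)

lemmas nsimps = m_assoc wX wY wX_r wY_r fX_add fY_add fX_add_r fY_add_r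

lemma ww_def': "ww = f (X21 (- 1)) \<otimes> (f (X12 1) \<otimes> f (X21 (- 1)))"
  by (simp add: Wg_def m_assoc)

lemma W1_def': "Wg G f True 1 = f (X12 1) \<otimes> (f (X21 (- 1)) \<otimes> f (X12 1))"
  by (simp add: Wg_def m_assoc)

lemma ww_W1: "ww = Wg G f True 1"
proof -
  have "ww \<otimes> ww = ww \<otimes> (f (X21 (- 1)) \<otimes> (f (X12 1) \<otimes> f (X21 (- 1))))"
    by (subst (2) ww_def') simp
  also have "\<dots> = f (X12 1) \<otimes> (f (X21 (- 1)) \<otimes> (f (X12 1) \<otimes> ww))"
    by (simp add: nsimps)
  also have "\<dots> = Wg G f True 1 \<otimes> ww"
    by (simp add: W1_def' m_assoc)
  finally show ?thesis by simp
qed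

lemma Wm1_True: "Wg G f True (- 1) = inv ww"
  using W_neg[of 1 True] ww_W1 by simp

lemma H_True: "Hg G f True u = Wg G f True u \<otimes> inv ww"
  by (simp add: Hg_def Wm1_True)

lemma W_True_def': "Wg G f True u = f (X12 u) \<otimes> (f (X21 (- rinv u)) \<otimes> f (X12 u))"
  by (simp add: Wg_def m_assoc)

end

locale st_grpQ = st_grp +
  assumes c_one: "u dvd 1 \<Longrightarrow> v dvd 1 \<Longrightarrow> Hg G f True u \<otimes> Hg G f True v = Hg G f True (u * v)"
begin

lemma w4: "ww \<otimes> (ww \<otimes> (ww \<otimes> ww)) = \<one>"
proof -
  have "Hg G f True (- 1) \<otimes> Hg G f True (- 1) = Hg G f True 1"
    using c_one[of "- 1" "- 1"] by simp
  then have "inv ww \<otimes> inv ww \<otimes> (inv ww \<otimes> inv ww) = \<one>"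
    by (simp add: H_True Wm1_True ww_W1[symmetric])
  then have "inv (ww \<otimes> (ww \<otimes> (ww \<otimes> ww))) = \<one>"
    by (simp add: inv_mult_group m_assoc)
  then show ?thesis by simp
qed

lemma w4r: "r \<in> carrier G \<Longrightarrow> ww \<otimes> (ww \<otimes> (ww \<otimes> (ww \<otimes> r))) = r"
  using w4 by (simp add: m_assoc[symmetric])

lemma inv_ww: "inv ww = ww \<otimes> (ww \<otimes> ww)"
  using w4 by (metis W_closed inv_equality m_assoc m_closed)

lemmas qsimps = nsimps w4 w4r inv_ww

definition gam where "gam a = ww \<otimes> f (X21 a)"

definition hq where "hq u = gam (- u) \<otimes> (gam (- rinv u) \<otimes> gam (- u))"

lemma gam_closed[simp]: "gam a \<in> carrier G" by (simp add: gam_def)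

lemma hq_H: "u dvd 1 \<Longrightarrow> hq u = Hg G f True u"
  by (simp add: hq_def gam_def H_True W_True_def' qsimps)

lemma Q1: "u dvd 1 \<Longrightarrow> v dvd 1 \<Longrightarrow> hq u \<otimes> hq v = hq (u * v)"
  by (simp add: hq_H c_one unit_mult)

lemma Q2: "gam a \<otimes> (gam 0 \<otimes> gam b) = hq (- 1) \<otimes> gam (a + b)"
  apply (simp add: hq_H H_True Wm1_True gam_def qsimps)
  apply (rule arg_cong[of _ _ "\<lambda>x. f (X12 x)"])
  apply (metis diff_conv_add_uminus add.commute)
  done

lemma WW: "u dvd 1 \<Longrightarrow> Wg G f True u \<otimes> Wg G f True u = ww \<otimes> ww"
proof -
  assume u: "u dvd 1"
  have "Hg G f True (- 1) \<otimes> Hg G f True u = Hg G f True (- u)"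
    using c_one[of "- 1" u] u by simp
  then have "inv ww \<otimes> inv ww \<otimes> (Wg G f True u \<otimes> inv ww) = inv (Wg G f True u) \<otimes> inv ww"
    using u by (simp add: H_True Wm1_True ww_W1[symmetric] W_neg)
  then have "inv ww \<otimes> inv ww \<otimes> Wg G f True u = inv (Wg G f True u)"
    by (simp add: m_assoc[symmetric])
  then have "inv (inv ww \<otimes> inv ww \<otimes> Wg G f True u) = Wg G f True u" by simp
  then have "inv (Wg G f True u) \<otimes> (ww \<otimes> ww) = Wg G f True u" by (simp add: inv_mult_group)
  then have "Wg G f True u \<otimes> (inv (Wg G f True u) \<otimes> (ww \<otimes> ww)) = Wg G f True u \<otimes> Wg G f True u" by simp
  then show ?thesis by simp
qed

lemma Q3: "u dvd 1 \<Longrightarrow> hq u \<otimes> (gam a \<otimes> hq u) = gam (u ^ 2 * a)"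
proof -
  assume u: "u dvd 1"
  have x: "f (X21 a) \<otimes> Hg G f True u = Hg G f True u \<otimes> f (X21 (u ^ 2 * a))"
    using H_conj2[OF u, of True "u ^ 2 * a"] u by (simp add: rinv_sq_mult)
  have "hq u \<otimes> (gam a \<otimes> hq u) = Hg G f True u \<otimes> (ww \<otimes> (f (X21 a) \<otimes> Hg G f True u))"
    using u by (simp add: hq_H gam_def m_assoc)
  also have "\<dots> = Hg G f True u \<otimes> (ww \<otimes> (Hg G f True u \<otimes> f (X21 (u ^ 2 * a))))"
    by (simp add: x)
  also have "\<dots> = (Wg G f True u \<otimes> Wg G f True u) \<otimes> (inv ww \<otimes> f (X21 (u ^ 2 * a)))"
    by (simp add: H_True m_assoc)
  also have "\<dots> = gam (u ^ 2 * a)"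
    using u by (simp add: WW gam_def m_assoc)
  finally show ?thesis .
qed

lemma GD1: "inv (gam 0) \<otimes> gam t = f (X21 t)"
  by (simp add: gam_def)

lemma GD2: "gam (- t) \<otimes> inv (gam 0) = f (X12 t)"
  by (simp add: gam_def m_assoc wX_r)

end


definition hh :: "('a, 'c) monoid_scheme \<Rightarrow> ('r::comm_ring_1 \<Rightarrow> 'a) \<Rightarrow> 'r \<Rightarrow> 'a" where
  "hh G E u = E (- u) \<otimes>\<^bsub>G\<^esub> (E (- rinv u) \<otimes>\<^bsub>G\<^esub> E (- u))"

definition dgen :: "('a, 'c) monoid_scheme \<Rightarrow> ('r::comm_ring_1 \<Rightarrow> 'a) \<Rightarrow> 'r st_gen \<Rightarrow> 'a" where
  "dgen G E g = (case g of X12 t \<Rightarrow> E (- t) \<otimes>\<^bsub>G\<^esub> inv\<^bsub>G\<^esub> (E 0) | X21 t \<Rightarrow> inv\<^bsub>G\<^esub> (E 0) \<otimes>\<^bsub>G\<^esub> E t)"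

lemma unit_mult': "(u::'r::comm_ring_1) dvd 1 \<Longrightarrow> v dvd 1 \<Longrightarrow> u * v dvd 1"
  by (metis mult_dvd_mono mult_1_left)

locale ca_grp = group G for G (structure) +
  fixes E :: "'r::comm_ring_1 \<Rightarrow> 'a"
  assumes E_closed[simp]: "E a \<in> carrier G"
    and r1: "u dvd 1 \<Longrightarrow> v dvd 1 \<Longrightarrow> hh G E u \<otimes> hh G E v = hh G E (u * v)"
    and r2: "E a \<otimes> (E 0 \<otimes> E b) = hh G E (- 1) \<otimes> E (a + b)"
    and r3: "u dvd 1 \<Longrightarrow> hh G E u \<otimes> (E a \<otimes> hh G E u) = E (u ^ 2 * a)"
begin

abbreviation "z \<equiv> E 0"
abbreviation "m \<equiv> hh G E (- 1)"

lemma hh_closed[simp]: "hh G E u \<in> carrier G"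
  by (simp add: hh_def)

lemma K1: "z \<otimes> z = m"
proof -
  have "z \<otimes> z \<otimes> z = m \<otimes> z" using r2[of 0 0] by (simp add: m_assoc)
  then show ?thesis by simp
qed

lemma K2: "hh G E 1 = \<one>"
  using r1[of 1 1] by simp

lemma K3: "m \<otimes> m = \<one>"
  using r1[of "- 1" "- 1"] K2 by simp

lemma K3r: "r \<in> carrier G \<Longrightarrow> m \<otimes> (m \<otimes> r) = r"
  using K3 by (simp add: m_assoc[symmetric])

lemma inv_m: "inv m = m"
  using K3 by (metis hh_closed inv_equality)

lemma K4: "m \<otimes> E a = E a \<otimes> m"
proof -
  have "E a \<otimes> (z \<otimes> z) = m \<otimes> E a" using r2[of a 0] by (simp add: m_assoc)
  then show ?thesis using K1 by simp
qed

lemma K4r: "r \<in> carrier G \<Longrightarrow> m \<otimes> (E a \<otimes> r) = E a \<otimes> (m \<otimes> r)"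
  by (simp add: m_assoc[symmetric] K4)

lemma inv_z: "inv z = z \<otimes> m"
proof -
  have "z \<otimes> m \<otimes> z = z \<otimes> (m \<otimes> z)" by (simp add: m_assoc)
  also have "\<dots> = z \<otimes> (z \<otimes> m)" using K4[of 0] by simp
  also have "\<dots> = z \<otimes> z \<otimes> m" by (simp add: m_assoc)
  also have "\<dots> = \<one>" using K1 K3 by simp
  finally have "z \<otimes> m \<otimes> z = \<one>" .
  then show ?thesis by (metis E_closed hh_closed m_closed inv_equality)
qed

lemma K4z: "m \<otimes> inv z = inv z \<otimes> m"
  by (simp add: inv_z m_assoc[symmetric] K4)

lemma K4zr: "r \<in> carrier G \<Longrightarrow> m \<otimes> (inv z \<otimes> r) = inv z \<otimes> (m \<otimes> r)"
  by (simp add: m_assoc[symmetric] K4z)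

lemma izz: "inv z \<otimes> inv z = m"
  by (simp add: inv_mult_group[symmetric] K1 inv_m)

lemma izzr: "r \<in> carrier G \<Longrightarrow> inv z \<otimes> (inv z \<otimes> r) = m \<otimes> r"
  by (simp add: m_assoc[symmetric] izz)

lemma K5: "E a \<otimes> (inv z \<otimes> E b) = E (a + b)"
proof -
  have "E a \<otimes> (inv z \<otimes> E b) = E a \<otimes> (z \<otimes> (m \<otimes> E b))"
    by (simp add: inv_z m_assoc)
  also have "\<dots> = (E a \<otimes> (z \<otimes> E b)) \<otimes> m" by (simp add: K4 m_assoc)
  also have "\<dots> = m \<otimes> E (a + b) \<otimes> m" by (simp add: r2)
  also have "\<dots> = E (a + b) \<otimes> (m \<otimes> m)" by (simp add: K4 m_assoc)
  also have "\<dots> = E (a + b)" by (simp add: K3)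
  finally show ?thesis .
qed

lemma K5r: "r \<in> carrier G \<Longrightarrow> E a \<otimes> (inv z \<otimes> (E b \<otimes> r)) = E (a + b) \<otimes> r"
  by (simp add: m_assoc[symmetric] K5)

lemma K6: "u dvd 1 \<Longrightarrow> hh G E u \<otimes> hh G E (rinv u) = \<one>"
  using r1[of u "rinv u"] K2 by simp

lemma inv_hh: "u dvd 1 \<Longrightarrow> inv (hh G E u) = hh G E (rinv u)"
  using K6 by (metis hh_closed inv_equality rinv_unit rinv_rinv)

lemma K7: "u dvd 1 \<Longrightarrow> hh G E u \<otimes> (z \<otimes> hh G E u) = z"
  using r3[of u 0] by simp

lemma K9: "u dvd 1 \<Longrightarrow> hh G E u \<otimes> inv z = inv z \<otimes> hh G E (rinv u)"
proof -
  assume u: "u dvd 1"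
  have "inv (hh G E u \<otimes> (z \<otimes> hh G E u)) = inv z" using K7[OF u] by simp
  then have "hh G E (rinv u) \<otimes> (inv z \<otimes> hh G E (rinv u)) = inv z"
    using u by (simp add: inv_mult_group inv_hh m_assoc)
  then have e: "hh G E (rinv u) \<otimes> inv z \<otimes> hh G E (rinv u) = inv z" by (simp add: m_assoc)
  have "hh G E u \<otimes> (hh G E (rinv u) \<otimes> inv z \<otimes> hh G E (rinv u)) = hh G E u \<otimes> inv z" using e by simp
  then show ?thesis using u K6[OF u] by (simp add: m_assoc[symmetric])
qed

lemma K9': "u dvd 1 \<Longrightarrow> inv z \<otimes> hh G E u = hh G E (rinv u) \<otimes> inv z"
  using K9[of "rinv u"] by simp

lemma K9r: "u dvd 1 \<Longrightarrow> r \<in> carrier G \<Longrightarrow> hh G E u \<otimes> (inv z \<otimes> r) = inv z \<otimes> (hh G E (rinv u) \<otimes> r)"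
  by (simp add: m_assoc[symmetric] K9)

lemma K9'r: "u dvd 1 \<Longrightarrow> r \<in> carrier G \<Longrightarrow> inv z \<otimes> (hh G E u \<otimes> r) = hh G E (rinv u) \<otimes> (inv z \<otimes> r)"
  by (simp add: m_assoc[symmetric] K9')

lemma K8: "u dvd 1 \<Longrightarrow> m \<otimes> hh G E u = hh G E (- u)"
  using r1[of "- 1" u] by simp

lemma K8r: "u dvd 1 \<Longrightarrow> r \<in> carrier G \<Longrightarrow> m \<otimes> (hh G E u \<otimes> r) = hh G E (- u) \<otimes> r"
  by (simp add: m_assoc[symmetric] K8)

lemma K8': "u dvd 1 \<Longrightarrow> hh G E u \<otimes> m = hh G E (- u)"
  using r1[of u "- 1"] by simp

lemma r3r: "u dvd 1 \<Longrightarrow> r \<in> carrier G \<Longrightarrow> hh G E u \<otimes> (E a \<otimes> (hh G E u \<otimes> r)) = E (u ^ 2 * a) \<otimes> r"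
  by (simp add: m_assoc[symmetric] r3[symmetric])

lemma dgen_closed[simp]: "dgen G E g \<in> carrier G"
  by (cases g) (simp_all add: dgen_def)

lemma dX: "dgen G E (X21 t) = inv z \<otimes> E t" by (simp add: dgen_def)
lemma dY: "dgen G E (X12 t) = E (- t) \<otimes> inv z" by (simp add: dgen_def)

lemma hh_r: "r \<in> carrier G \<Longrightarrow> E (- u) \<otimes> (E (- rinv u) \<otimes> (E (- u) \<otimes> r)) = hh G E u \<otimes> r"
  by (simp add: hh_def m_assoc)

lemma hh_neg_r: "u dvd 1 \<Longrightarrow> r \<in> carrier G \<Longrightarrow> E u \<otimes> (E (rinv u) \<otimes> (E u \<otimes> r)) = hh G E (- u) \<otimes> r"
  by (simp add: hh_def m_assoc rinv_neg)

lemma K8'r: "u dvd 1 \<Longrightarrow> r \<in> carrier G \<Longrightarrow> hh G E u \<otimes> (m \<otimes> r) = hh G E (- u) \<otimes> r"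
  by (simp add: m_assoc[symmetric] K8')

lemma WF: "u dvd 1 \<Longrightarrow> Wg G (dgen G E) False u = inv z \<otimes> hh G E u"
proof -
  assume u: "u dvd 1"
  have "Wg G (dgen G E) False u = inv z \<otimes> (E u \<otimes> (E (rinv u) \<otimes> (inv z \<otimes> (inv z \<otimes> E u))))"
    by (simp add: Wg_def dX dY m_assoc)
  also have "\<dots> = inv z \<otimes> (hh G E (- u) \<otimes> m)"
    using u by (simp add: izzr K4 hh_neg_r[symmetric] m_assoc)
  also have "\<dots> = inv z \<otimes> hh G E u" using u K8'[of "- u"] by simp
  finally show ?thesis .
qed

lemma WT: "u dvd 1 \<Longrightarrow> Wg G (dgen G E) True u = hh G E (- u) \<otimes> inv z"
proof -
  assume u: "u dvd 1"
  have "Wg G (dgen G E) True u = E (- u) \<otimes> (inv z \<otimes> (inv z \<otimes> (E (- rinv u) \<otimes> (E (- u) \<otimes> inv z))))"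
    by (simp add: Wg_def dX dY m_assoc)
  also have "\<dots> = hh G E u \<otimes> (m \<otimes> inv z)"
    using u by (simp add: izzr K4r hh_r)
  also have "\<dots> = hh G E (- u) \<otimes> inv z" using u by (simp add: K8'r)
  finally show ?thesis .
qed

lemma dgen_st: "st_grp G (dgen G E)"
proof (unfold_locales)
  fix g show "dgen G E g \<in> carrier G" by simp
next
  fix i and s t :: 'r
  show "dgen G E (xg i s) \<otimes> dgen G E (xg i t) = dgen G E (xg i (s + t))"
    by (cases i) (simp_all add: dX dY m_assoc K5r K5 add.commute)
next
  fix i and u t :: 'r
  assume u: "u dvd 1"
  show "Wg G (dgen G E) i u \<otimes> dgen G E (xg i t) \<otimes> Wg G (dgen G E) i (- u) = dgen G E (xg (\<not> i) (- (rinv u ^ 2 * t)))"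
  proof (cases i)
    case True
    have "Wg G (dgen G E) True u \<otimes> dgen G E (X12 t) \<otimes> Wg G (dgen G E) True (- u)
        = hh G E (- u) \<otimes> (inv z \<otimes> (E (- t) \<otimes> (inv z \<otimes> (hh G E u \<otimes> inv z))))"
      using u by (simp add: WT dY m_assoc)
    also have "\<dots> = inv z \<otimes> E (- (rinv u ^ 2 * t))"
      using u by (simp add: K9 K9r izzr K8 rinv_neg r3)
    finally show ?thesis using True by (simp add: dX)
  next
    case False
    have "Wg G (dgen G E) False u \<otimes> dgen G E (X21 t) \<otimes> Wg G (dgen G E) False (- u)
        = inv z \<otimes> (hh G E u \<otimes> (inv z \<otimes> (E t \<otimes> (inv z \<otimes> hh G E (- u)))))"
      using u by (simp add: WF dX m_assoc)
    also have "\<dots> = E (rinv u ^ 2 * t) \<otimes> inv z"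
      using u by (simp add: K9' K9'r izzr K8r K4r rinv_neg r3r)
    finally show ?thesis using False by (simp add: dY)
  qed
qed

lemma dgen_H: "u dvd 1 \<Longrightarrow> Hg G (dgen G E) True u = hh G E u"
proof -
  assume u: "u dvd 1"
  have "Hg G (dgen G E) True u = hh G E (- u) \<otimes> (inv z \<otimes> (hh G E 1 \<otimes> inv z))"
    using u by (simp add: Hg_def WT m_assoc)
  also have "\<dots> = hh G E u" using u by (simp add: K2 izz K8' rinv_neg)
  finally show ?thesis .
qed

lemma dgen_c: "u dvd 1 \<Longrightarrow> v dvd 1 \<Longrightarrow>
  Hg G (dgen G E) True u \<otimes> Hg G (dgen G E) True v \<otimes> inv (Hg G (dgen G E) True (u * v)) = \<one>"
  by (simp add: dgen_H unit_mult' r1)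

lemma dgen_gam: "Wg G (dgen G E) False (- 1) \<otimes> dgen G E (X21 a) = E a"
  by (simp add: WF dX m_assoc izzr K4zr K3r)

end


context st_grp
begin

lemma eval_w: "eval_word G f (w_word i u) = Wg G f i u"
  by (simp add: w_word_def Wg_def eval_word_append m_assoc)

lemma eval_h12: "eval_word G f (h12_word u) = Hg G f True u"
  by (simp add: h12_word_def Hg_def eval_word_append eval_w)

lemma eval_c: "eval_word G f (c_word u v) = Hg G f True u \<otimes> Hg G f True v \<otimes> inv (Hg G f True (u * v))"
  by (simp add: c_word_def eval_word_append eval_h12 eval_word_inv m_assoc)

lemma st_rels_hold: "(l, r) \<in> St_rels \<Longrightarrow> eval_word G f l = eval_word G f r"
  unfolding St_rels_def
  by (auto simp: eval_word_append eval_w f_add f_w[symmetric] m_assoc)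

end

context ca_grp
begin

lemma eval_h: "eval_word G E (h_word u) = hh G E u"
  by (simp add: h_word_def hh_def eval_word_append)

lemma ca_rels_hold: "(l, r) \<in> CA_rels \<Longrightarrow> eval_word G E l = eval_word G E r"
  unfolding CA_rels_def
  by (auto simp: eval_word_append eval_h r1 r2 r3)

end

context st_grpQ
begin

lemma gam_ca: "ca_grp G gam"
proof (unfold_locales)
  show "\<And>a. gam a \<in> carrier G" by simp
  have hh: "\<And>u. hh G gam u = hq u" by (simp add: hh_def hq_def)
  show "\<And>u v. u dvd 1 \<Longrightarrow> v dvd 1 \<Longrightarrow> hh G gam u \<otimes> hh G gam v = hh G gam (u * v)"
    by (simp add: hh Q1)
  show "\<And>a b. gam a \<otimes> (gam 0 \<otimes> gam b) = hh G gam (- 1) \<otimes> gam (a + b)"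
    by (simp add: hh Q2)
  show "\<And>u a. u dvd 1 \<Longrightarrow> hh G gam u \<otimes> (gam a \<otimes> hh G gam u) = gam (u\<^sup>2 * a)"
    by (simp add: hh Q3)
qed

end

section \<open>SL2\<close>

lemma SL2_mult: "(a, b, c, d) \<otimes>\<^bsub>SL2\<^esub> (e, f, g, h) = (a * e + b * g, a * f + b * h, c * e + d * g, c * f + d * h)"
  by (simp add: SL2_def)

lemma SL2_carrier: "(a, b, c, d) \<in> carrier SL2 \<longleftrightarrow> a * d - b * c = 1"
  by (simp add: SL2_def)

lemma SL2_one: "\<one>\<^bsub>SL2\<^esub> = (1, 0, 0, 1)"
  by (simp add: SL2_def)

lemma det_mult: "((a::'a::comm_ring_1) * e + b * g) * (c * f + d * h) - (a * f + b * h) * (c * e + d * g)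
   = (a * d - b * c) * (e * h - f * g)"
  by (simp add: algebra_simps)

lemma group_SL2: "group (SL2 :: ('a::comm_ring_1 \<times> 'a \<times> 'a \<times> 'a) monoid)"
proof (rule groupI)
  fix x y :: "'a \<times> 'a \<times> 'a \<times> 'a"
  assume x: "x \<in> carrier SL2" and y: "y \<in> carrier SL2"
  obtain a b c d where xx: "x = (a, b, c, d)" using prod_cases4 by blast
  obtain e f g h where yy: "y = (e, f, g, h)" using prod_cases4 by blast
  show "x \<otimes>\<^bsub>SL2\<^esub> y \<in> carrier SL2"
    using x y unfolding xx yy SL2_mult SL2_carrier det_mult by simp
next
  show "\<one>\<^bsub>SL2\<^esub> \<in> carrier (SL2 :: ('a \<times> 'a \<times> 'a \<times> 'a) monoid)" by (simp add: SL2_def)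
next
  fix x y w :: "'a \<times> 'a \<times> 'a \<times> 'a"
  obtain a b c d where xx: "x = (a, b, c, d)" using prod_cases4 by blast
  obtain e f g h where yy: "y = (e, f, g, h)" using prod_cases4 by blast
  obtain i j k l where ww: "w = (i, j, k, l)" using prod_cases4 by blast
  show "x \<otimes>\<^bsub>SL2\<^esub> y \<otimes>\<^bsub>SL2\<^esub> w = x \<otimes>\<^bsub>SL2\<^esub> (y \<otimes>\<^bsub>SL2\<^esub> w)"
    unfolding xx yy ww SL2_mult by (simp add: algebra_simps)
next
  fix x :: "'a \<times> 'a \<times> 'a \<times> 'a"
  obtain a b c d where xx: "x = (a, b, c, d)" using prod_cases4 by blast
  show "\<one>\<^bsub>SL2\<^esub> \<otimes>\<^bsub>SL2\<^esub> x = x" unfolding xx SL2_one SL2_mult by simp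
next
  fix x :: "'a \<times> 'a \<times> 'a \<times> 'a"
  assume x: "x \<in> carrier SL2"
  obtain a b c d where xx: "x = (a, b, c, d)" using prod_cases4 by blast
  have "(d, - b, - c, a) \<in> carrier SL2" using x unfolding xx SL2_carrier by (simp add: algebra_simps)
  moreover have "(d, - b, - c, a) \<otimes>\<^bsub>SL2\<^esub> x = \<one>\<^bsub>SL2\<^esub>"
    using x unfolding xx SL2_carrier SL2_mult SL2_one by (simp add: algebra_simps)
  ultimately show "\<exists>y\<in>carrier SL2. y \<otimes>\<^bsub>SL2\<^esub> x = \<one>\<^bsub>SL2\<^esub>" by blast
qed

lemma SL2_inv: "(a::'a::comm_ring_1) * d - b * c = 1 \<Longrightarrow> inv\<^bsub>SL2\<^esub> (a, b, c, d) = (d, - b, - c, a)"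
proof -
  assume x: "a * d - b * c = 1"
  interpret group "SL2 :: ('a \<times> 'a \<times> 'a \<times> 'a) monoid" by (rule group_SL2)
  show ?thesis
  proof (rule inv_equality)
    show "(d, - b, - c, a) \<otimes>\<^bsub>SL2\<^esub> (a, b, c, d) = \<one>\<^bsub>SL2\<^esub>"
      using x unfolding SL2_mult SL2_one by (simp add: algebra_simps)
    show "(a, b, c, d) \<in> carrier SL2" using x by (simp add: SL2_carrier)
    show "(d, - b, - c, a) \<in> carrier SL2" using x by (simp add: SL2_carrier algebra_simps)
  qed
qed

lemma eps_closed[simp]: "eps_mat a \<in> carrier SL2"
  by (simp add: eps_mat_def SL2_carrier)

lemma hh_SL2: "(u::'a::comm_ring_1) dvd 1 \<Longrightarrow> hh SL2 eps_mat u = (u, 0, 0, rinv u)"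
proof -
  assume u: "u dvd 1"
  have "u * rinv u = 1" using u by simp
  then show ?thesis by (simp add: hh_def eps_mat_def SL2_mult algebra_simps)
qed

lemma SL2_ca: "ca_grp (SL2 :: ('a::comm_ring_1 \<times> 'a \<times> 'a \<times> 'a) monoid) eps_mat"
proof -
  interpret group "SL2 :: ('a \<times> 'a \<times> 'a \<times> 'a) monoid" by (rule group_SL2)
  show ?thesis
  proof (unfold_locales)
    show "\<And>a. eps_mat a \<in> carrier SL2" by simp
    show "\<And>u v. (u::'a) dvd 1 \<Longrightarrow> v dvd 1 \<Longrightarrow>
      hh SL2 eps_mat u \<otimes>\<^bsub>SL2\<^esub> hh SL2 eps_mat v = hh SL2 eps_mat (u * v)"
      by (simp add: hh_SL2 unit_mult' SL2_mult rinv_mult)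
    show "\<And>a b. eps_mat (a::'a) \<otimes>\<^bsub>SL2\<^esub> (eps_mat 0 \<otimes>\<^bsub>SL2\<^esub> eps_mat b) =
      hh SL2 eps_mat (- 1) \<otimes>\<^bsub>SL2\<^esub> eps_mat (a + b)"
      by (simp add: hh_SL2 eps_mat_def SL2_mult)
    show "\<And>u a. (u::'a) dvd 1 \<Longrightarrow>
      hh SL2 eps_mat u \<otimes>\<^bsub>SL2\<^esub> (eps_mat a \<otimes>\<^bsub>SL2\<^esub> hh SL2 eps_mat u) = eps_mat (u\<^sup>2 * a)"
    proof -
      fix u a :: 'a assume u: "u dvd 1"
      have "u * rinv u = 1" using u by simp
      then show "hh SL2 eps_mat u \<otimes>\<^bsub>SL2\<^esub> (eps_mat a \<otimes>\<^bsub>SL2\<^esub> hh SL2 eps_mat u) = eps_mat (u\<^sup>2 * a)"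
        using u by (simp add: hh_SL2 eps_mat_def SL2_mult power2_eq_square algebra_simps)
    qed
  qed
qed


lemma id_hom_gen: "group G \<Longrightarrow> (\<lambda>x. x) \<in> hom G G"
  by (simp add: hom_def)

lemma pres_class_eval: "pres_class R w = eval_word (presented_group R) (\<lambda>x. pres_class R (gen x)) w"
proof -
  interpret F: group "presented_group R" by (rule group_presented)
  have "(\<lambda>x. x) \<in> hom (presented_group R) (presented_group R)" by (rule id_hom_gen) (rule group_presented)
  from F.hom_pres_eval[OF this, of w] show ?thesis by simp
qed

context group
begin

lemma comm_inv: "a \<in> carrier G \<Longrightarrow> g \<in> carrier G \<Longrightarrow> a \<otimes> g = g \<otimes> a \<Longrightarrow> a \<otimes> inv g = inv g \<otimes> a"
  using conj_swap[of "inv g" a a] by simp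

lemma comm_mult: "a \<in> carrier G \<Longrightarrow> g \<in> carrier G \<Longrightarrow> h \<in> carrier G \<Longrightarrow> a \<otimes> g = g \<otimes> a \<Longrightarrow> a \<otimes> h = h \<otimes> a
  \<Longrightarrow> a \<otimes> (g \<otimes> h) = (g \<otimes> h) \<otimes> a"
proof -
  assume c: "a \<in> carrier G" "g \<in> carrier G" "h \<in> carrier G" and e1: "a \<otimes> g = g \<otimes> a" and e2: "a \<otimes> h = h \<otimes> a"
  have "a \<otimes> (g \<otimes> h) = (a \<otimes> g) \<otimes> h" using c by (simp add: m_assoc)
  also have "\<dots> = g \<otimes> (a \<otimes> h)" using c e1 by (simp add: m_assoc)
  also have "\<dots> = (g \<otimes> h) \<otimes> a" using c e2 by (simp add: m_assoc)
  finally show ?thesis .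
qed

end

lemma pres_central:
  assumes a: "a \<in> carrier (presented_group R)"
    and gx: "\<And>x. a \<otimes>\<^bsub>presented_group R\<^esub> pres_class R (gen x) = pres_class R (gen x) \<otimes>\<^bsub>presented_group R\<^esub> a"
    and P: "P \<in> carrier (presented_group R)"
  shows "a \<otimes>\<^bsub>presented_group R\<^esub> P = P \<otimes>\<^bsub>presented_group R\<^esub> a"
proof -
  interpret F: group "presented_group R" by (rule group_presented)
  have "a \<otimes>\<^bsub>presented_group R\<^esub> pres_class R w = pres_class R w \<otimes>\<^bsub>presented_group R\<^esub> a" for w
  proof (induction w)
    case Nil then show ?case using a by (simp add: pres_one'[symmetric])
  next
    case (Cons c w)
    obtain x b where c: "c = (x, b)" by force
    have s: "pres_class R ((x, b) # w) = pres_class R [(x, b)] \<otimes>\<^bsub>presented_group R\<^esub> pres_class R w"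
      by (simp add: pres_mult')
    have t0: "pres_class R [(x, False)] = inv\<^bsub>presented_group R\<^esub> pres_class R (gen x)"
      by (simp add: pres_inv' inv_word_def gen_def)
    have t1: "pres_class R [(x, True)] = pres_class R (gen x)"
      by (simp add: gen_def)
    have g: "a \<otimes>\<^bsub>presented_group R\<^esub> pres_class R [(x, b)] = pres_class R [(x, b)] \<otimes>\<^bsub>presented_group R\<^esub> a"
      using gx[of x] F.comm_inv[OF a, of "pres_class R (gen x)"] by (cases b) (simp_all add: t0 t1)
    show ?case unfolding c s by (rule F.comm_mult[OF a _ _ g Cons]) simp_all
  qed
  then show ?thesis using P pres_carrier_cases by blast
qed

context st_grp
begin

lemma W_hom: "group H \<Longrightarrow> h \<in> hom G H \<Longrightarrow> Wg H (\<lambda>g. h (f g)) i u = h (Wg G f i u)"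
proof -
  assume H: "group H" and h: "h \<in> hom G H"
  interpret group_hom G H h using H h by (simp add: group_hom_def group_hom_axioms_def group_axioms)
  show ?thesis by (simp add: Wg_def)
qed

lemma H_hom: "group H \<Longrightarrow> h \<in> hom G H \<Longrightarrow> Hg H (\<lambda>g. h (f g)) i u = h (Hg G f i u)"
proof -
  assume H: "group H" and h: "h \<in> hom G H"
  interpret group_hom G H h using H h by (simp add: group_hom_def group_hom_axioms_def group_axioms)
  show ?thesis using W_hom[OF H h] by (simp add: Hg_def)
qed

lemma st_grp_hom: "group H \<Longrightarrow> h \<in> hom G H \<Longrightarrow> st_grp H (\<lambda>g. h (f g))"
proof -
  assume H: "group H" and h: "h \<in> hom G H"
  interpret group_hom G H h using H h by (simp add: group_hom_def group_hom_axioms_def group_axioms)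
  show ?thesis
  proof (unfold_locales)
    show "\<And>g. h (f g) \<in> carrier H" by simp
    fix i s t
    have "h (f (xg i s) \<otimes> f (xg i t)) = h (f (xg i (s + t)))" by (simp only: f_add)
    then show "h (f (xg i s)) \<otimes>\<^bsub>H\<^esub> h (f (xg i t)) = h (f (xg i (s + t)))" by simp
  next
    fix u i t assume u: "u dvd (1::'r)"
    have e: "h (Wg G f i u \<otimes> f (xg i t) \<otimes> Wg G f i (- u)) = h (f (xg (\<not> i) (- (rinv u ^ 2 * t))))"
      by (simp only: f_w[OF u])
    then show "Wg H (\<lambda>g. h (f g)) i u \<otimes>\<^bsub>H\<^esub> h (f (xg i t)) \<otimes>\<^bsub>H\<^esub> Wg H (\<lambda>g. h (f g)) i (- u) =
           h (f (xg (\<not> i) (- (rinv u ^ 2 * t))))"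
      by (simp add: W_hom[OF H h])
  qed
qed

end


theorem theoremA14:
  shows "\<exists>\<gamma>. \<gamma> \<in> iso (CA :: ('a::comm_ring_1) word set monoid) (St Mod C2)
     \<and> (\<forall>a::'a. \<gamma> (pres_class CA_rels (gen a))
           = C2 #>\<^bsub>St\<^esub> pres_class St_rels (w_word False (- 1) @ gen (X21 a)))
     \<and> \<gamma> \<in> iso (CA\<lparr>carrier := UA\<rparr>) ((St\<lparr>carrier := K2\<rparr>) Mod C2)"
proof -
  define EC :: "'a \<Rightarrow> 'a word set" where "EC = (\<lambda>a. pres_class CA_rels (gen a))"
  define FS :: "'a st_gen \<Rightarrow> 'a st_gen word set" where "FS = (\<lambda>g. pres_class St_rels (gen g))"
  interpret CA: group "CA :: 'a word set monoid" by (simp add: CA_def group_presented)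
  interpret St: group "St :: 'a st_gen word set monoid" by (simp add: St_def group_presented)
  have CAc: "ca_grp (CA :: 'a word set monoid) EC"
  proof (unfold_locales)
    fix a :: 'a show "EC a \<in> carrier CA" by (simp add: EC_def CA_def)
  next
    have hhE: "\<And>u. hh CA EC u = pres_class CA_rels (h_word u)"
      by (simp add: hh_def EC_def CA_def h_word_def pres_mult')
    fix u v a b :: 'a
    show "u dvd 1 \<Longrightarrow> v dvd 1 \<Longrightarrow> hh CA EC u \<otimes>\<^bsub>CA\<^esub> hh CA EC v = hh CA EC (u * v)"
      by (simp add: hhE) (simp add: CA_def pres_mult', rule pres_rel', auto simp: CA_rels_def)
    show "EC a \<otimes>\<^bsub>CA\<^esub> (EC 0 \<otimes>\<^bsub>CA\<^esub> EC b) = hh CA EC (- 1) \<otimes>\<^bsub>CA\<^esub> EC (a + b)"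
      by (simp add: hhE) (simp add: EC_def CA_def pres_mult', rule pres_rel', auto simp: CA_rels_def)
    show "u dvd 1 \<Longrightarrow> hh CA EC u \<otimes>\<^bsub>CA\<^esub> (EC a \<otimes>\<^bsub>CA\<^esub> hh CA EC u) = EC (u\<^sup>2 * a)"
      by (simp add: hhE) (simp add: EC_def CA_def pres_mult', rule pres_rel', auto simp: CA_rels_def)
  qed
  interpret CAc: ca_grp "CA :: 'a word set monoid" EC by (rule CAc)
  have WS: "\<And>i u. Wg St FS i u = pres_class St_rels (w_word i u)"
    by (simp add: Wg_def FS_def St_def w_word_def pres_mult')
  have Stc: "st_grp (St :: 'a st_gen word set monoid) FS"
  proof (unfold_locales)
    fix g :: "'a st_gen" show "FS g \<in> carrier St" by (simp add: FS_def St_def)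
  next
    fix i and s t :: 'a
    show "FS (xg i s) \<otimes>\<^bsub>St\<^esub> FS (xg i t) = FS (xg i (s + t))"
      by (simp add: FS_def St_def pres_mult', rule pres_rel', auto simp: St_rels_def)
  next
    fix i and u t :: 'a assume u: "u dvd 1"
    show "Wg St FS i u \<otimes>\<^bsub>St\<^esub> FS (xg i t) \<otimes>\<^bsub>St\<^esub> Wg St FS i (- u) = FS (xg (\<not> i) (- ((rinv u)\<^sup>2 * t)))"
    proof -
      have m: "(w_word i u @ gen (xg i t) @ w_word i (- u), gen (xg (\<not> i) (- ((rinv u)\<^sup>2 * t)))) \<in> St_rels"
        unfolding St_rels_def using u by blast
      show ?thesis unfolding WS by (simp add: FS_def St_def pres_mult' pres_rel'[OF m])
    qed
  qed
  interpret Stc: st_grp "St :: 'a st_gen word set monoid" FS by (rule Stc)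
  have cls_c: "\<And>u v. pres_class St_rels (c_word u v) =
      Hg St FS True u \<otimes>\<^bsub>St\<^esub> Hg St FS True v \<otimes>\<^bsub>St\<^esub> inv\<^bsub>St\<^esub> (Hg St FS True (u * v))"
  proof -
    fix u v :: 'a
    have "pres_class St_rels (c_word u v) = eval_word St FS (c_word u v)"
      unfolding St_def FS_def by (rule pres_class_eval)
    then show "pres_class St_rels (c_word u v) =
      Hg St FS True u \<otimes>\<^bsub>St\<^esub> Hg St FS True v \<otimes>\<^bsub>St\<^esub> inv\<^bsub>St\<^esub> (Hg St FS True (u * v))"
      by (simp add: Stc.eval_c)
  qed
  let ?C = "C2 :: 'a st_gen word set set"
  define Sg :: "'a st_gen word set set" where
    "Sg = {pres_class St_rels (c_word u v) | u v. u dvd 1 \<and> v dvd 1}"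
  have C2_eq: "?C = generate St Sg" by (simp add: C2_def Sg_def)
  have Sg_sub: "Sg \<subseteq> carrier St" by (auto simp: Sg_def St_def)
  have FS_gen: "\<And>x. pres_class St_rels (gen x) = FS x" by (simp add: FS_def)
  have Sg_central: "\<And>h P. h \<in> Sg \<Longrightarrow> P \<in> carrier St \<Longrightarrow> h \<otimes>\<^bsub>St\<^esub> P = P \<otimes>\<^bsub>St\<^esub> h"
  proof -
    fix h P assume h: "h \<in> Sg" and P: "P \<in> carrier (St :: 'a st_gen word set monoid)"
    then obtain u v :: 'a where uv: "u dvd 1" "v dvd 1" and hc: "h = pres_class St_rels (c_word u v)"
      by (auto simp: Sg_def)
    have hcar: "h \<in> carrier St" using h Sg_sub by blast
    have gx: "\<And>x. h \<otimes>\<^bsub>St\<^esub> FS x = FS x \<otimes>\<^bsub>St\<^esub> h"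
    proof -
      fix x :: "'a st_gen"
      show "h \<otimes>\<^bsub>St\<^esub> FS x = FS x \<otimes>\<^bsub>St\<^esub> h"
      proof (cases x)
        case (X12 t)
        then show ?thesis using Stc.c_comm[OF uv, of True True t] by (simp add: hc cls_c)
      next
        case (X21 t)
        then show ?thesis using Stc.c_comm[OF uv, of True False t] by (simp add: hc cls_c)
      qed
    qed
    show "h \<otimes>\<^bsub>St\<^esub> P = P \<otimes>\<^bsub>St\<^esub> h"
      using pres_central[of h St_rels P] hcar P gx by (simp add: St_def FS_gen)
  qed
  have C2_central: "\<And>h. h \<in> ?C \<Longrightarrow> h \<in> carrier St \<and> (\<forall>P\<in>carrier St. h \<otimes>\<^bsub>St\<^esub> P = P \<otimes>\<^bsub>St\<^esub> h)"
    unfolding C2_eq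
  proof -
    fix h assume "h \<in> generate St Sg"
    then show "h \<in> carrier St \<and> (\<forall>P\<in>carrier St. h \<otimes>\<^bsub>St\<^esub> P = P \<otimes>\<^bsub>St\<^esub> h)"
    proof (induction rule: generate.induct)
      case one then show ?case by simp
    next
      case (incl h) then show ?case using Sg_sub Sg_central by blast
    next
      case (inv h)
      then have "h \<in> carrier St" using Sg_sub by blast
      then show ?case using Sg_central[OF inv] St.comm_inv by (metis St.inv_closed)
    next
      case (eng h1 h2)
      then show ?case using St.comm_mult by (metis St.m_closed)
    qed
  qed
  have C2_sub: "subgroup ?C St" unfolding C2_eq by (rule St.generate_is_subgroup[OF Sg_sub])
  have C2_normal: "?C \<lhd> St"
    unfolding St.normal_inv_iff
  proof (intro conjI C2_sub ballI)
    fix x h :: "'a st_gen word set" assume x: "x \<in> carrier St" and h: "h \<in> ?C"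
    have "x \<otimes>\<^bsub>St\<^esub> h \<otimes>\<^bsub>St\<^esub> inv\<^bsub>St\<^esub> x = h \<otimes>\<^bsub>St\<^esub> x \<otimes>\<^bsub>St\<^esub> inv\<^bsub>St\<^esub> x"
      using C2_central[OF h] x by simp
    also have "\<dots> = h" using C2_central[OF h] x by (simp add: St.m_assoc)
    finally show "x \<otimes>\<^bsub>St\<^esub> h \<otimes>\<^bsub>St\<^esub> inv\<^bsub>St\<^esub> x \<in> ?C" using h by simp
  qed
  interpret N: normal ?C St by (rule C2_normal)
  have Qgrp: "group (St Mod ?C)" by (rule N.factorgroup_is_group)
  interpret Q0: group "St Mod ?C" by (rule Qgrp)
  have pi_hom: "(\<lambda>a. ?C #>\<^bsub>St\<^esub> a) \<in> hom St (St Mod ?C)" by (rule N.r_coset_hom_Mod)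
  interpret PI: group_hom St "St Mod ?C" "\<lambda>a. ?C #>\<^bsub>St\<^esub> a"
    using pi_hom Qgrp by (simp add: group_hom_def group_hom_axioms_def St.group_axioms)
  have pi_C2: "\<And>c. c \<in> ?C \<Longrightarrow> ?C #>\<^bsub>St\<^esub> c = \<one>\<^bsub>St Mod ?C\<^esub>"
    using subgroup.rcos_const[OF C2_sub St.group_axioms] by simp
  have Qst: "st_grp (St Mod ?C) (\<lambda>g. ?C #>\<^bsub>St\<^esub> FS g)"
    by (rule Stc.st_grp_hom[OF Qgrp pi_hom])
  have Qc: "st_grpQ (St Mod ?C) (\<lambda>g. ?C #>\<^bsub>St\<^esub> FS g)"
  proof (rule st_grpQ.intro[OF Qst], unfold_locales)
    fix u v :: 'a assume u: "u dvd 1" and v: "v dvd 1"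
    let ?c = "Hg St FS True u \<otimes>\<^bsub>St\<^esub> Hg St FS True v \<otimes>\<^bsub>St\<^esub> inv\<^bsub>St\<^esub> (Hg St FS True (u * v))"
    have cC2: "?c \<in> ?C" unfolding C2_eq cls_c[symmetric]
      using u v unfolding Sg_def by (intro generate.incl) blast
    have e: "Hg St FS True u \<otimes>\<^bsub>St\<^esub> Hg St FS True v = ?c \<otimes>\<^bsub>St\<^esub> Hg St FS True (u * v)"
      by (simp add: St.m_assoc)
    show "Hg (St Mod ?C) (\<lambda>g. ?C #>\<^bsub>St\<^esub> FS g) True u \<otimes>\<^bsub>St Mod ?C\<^esub> Hg (St Mod ?C) (\<lambda>g. ?C #>\<^bsub>St\<^esub> FS g) True v =
          Hg (St Mod ?C) (\<lambda>g. ?C #>\<^bsub>St\<^esub> FS g) True (u * v)"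
      unfolding Stc.H_hom[OF Qgrp pi_hom]
    proof -
      have "(?C #>\<^bsub>St\<^esub> Hg St FS True u) \<otimes>\<^bsub>St Mod ?C\<^esub> (?C #>\<^bsub>St\<^esub> Hg St FS True v)
          = ?C #>\<^bsub>St\<^esub> (Hg St FS True u \<otimes>\<^bsub>St\<^esub> Hg St FS True v)" by simp
      also have "\<dots> = ?C #>\<^bsub>St\<^esub> (?c \<otimes>\<^bsub>St\<^esub> Hg St FS True (u * v))" using e by (rule arg_cong)
      also have "\<dots> = (?C #>\<^bsub>St\<^esub> ?c) \<otimes>\<^bsub>St Mod ?C\<^esub> (?C #>\<^bsub>St\<^esub> Hg St FS True (u * v))"
        by (rule PI.hom_mult) simp_all
      also have "\<dots> = \<one>\<^bsub>St Mod ?C\<^esub> \<otimes>\<^bsub>St Mod ?C\<^esub> (?C #>\<^bsub>St\<^esub> Hg St FS True (u * v))"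
        by (simp only: pi_C2[OF cC2])
      also have "\<dots> = ?C #>\<^bsub>St\<^esub> Hg St FS True (u * v)" by (rule Q0.l_one) simp
      finally show "(?C #>\<^bsub>St\<^esub> Hg St FS True u) \<otimes>\<^bsub>St Mod ?C\<^esub> (?C #>\<^bsub>St\<^esub> Hg St FS True v)
          = ?C #>\<^bsub>St\<^esub> Hg St FS True (u * v)" .
    qed
  qed
  interpret Q: st_grpQ "St Mod ?C" "\<lambda>g. ?C #>\<^bsub>St\<^esub> FS g" by (rule Qc)
  define \<gamma> where "\<gamma> = pres_map (St Mod ?C) Q.gam"
  have Qca: "ca_grp (St Mod ?C) Q.gam" by (rule Q.gam_ca)
  have Qrels: "\<And>l r. (l, r) \<in> CA_rels \<Longrightarrow> eval_word (St Mod ?C) Q.gam l = eval_word (St Mod ?C) Q.gam r"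
    by (rule ca_grp.ca_rels_hold[OF Qca])
  have g_hom: "\<gamma> \<in> hom CA (St Mod ?C)"
    unfolding \<gamma>_def CA_def by (rule Q0.pres_map_hom[OF Q.gam_closed Qrels])
  interpret GH: group_hom CA "St Mod ?C" \<gamma>
    using g_hom Qgrp by (simp add: group_hom_def group_hom_axioms_def CA.group_axioms)
  have g_EC: "\<And>a. \<gamma> (EC a) = Q.gam a"
    unfolding \<gamma>_def EC_def by (simp add: Q0.pres_map_class[OF Q.gam_closed Qrels])
  have gam_eq: "\<And>a. Q.gam a = ?C #>\<^bsub>St\<^esub> pres_class St_rels (w_word False (- 1) @ gen (X21 a))"
  proof -
    fix a :: 'a
    have "Q.gam a = (?C #>\<^bsub>St\<^esub> Wg St FS False (- 1)) \<otimes>\<^bsub>St Mod ?C\<^esub> (?C #>\<^bsub>St\<^esub> FS (X21 a))"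
      by (simp add: Q.gam_def Stc.W_hom[OF Qgrp pi_hom])
    also have "\<dots> = ?C #>\<^bsub>St\<^esub> (Wg St FS False (- 1) \<otimes>\<^bsub>St\<^esub> FS (X21 a))"
      by (rule PI.hom_mult[symmetric]) simp_all
    also have "\<dots> = ?C #>\<^bsub>St\<^esub> pres_class St_rels (w_word False (- 1) @ gen (X21 a))"
      unfolding WS by (simp add: FS_def St_def pres_mult')
    finally show "Q.gam a = ?C #>\<^bsub>St\<^esub> pres_class St_rels (w_word False (- 1) @ gen (X21 a))" .
  qed
  define \<delta> where "\<delta> = pres_map CA (dgen CA EC)"
  have Dst: "st_grp CA (dgen CA EC)" by (rule CAc.dgen_st)
  have Drels: "\<And>l r. (l, r) \<in> St_rels \<Longrightarrow> eval_word CA (dgen CA EC) l = eval_word CA (dgen CA EC) r"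
    by (rule st_grp.st_rels_hold[OF Dst])
  have d_hom: "\<delta> \<in> hom St CA"
    unfolding \<delta>_def St_def by (rule CA.pres_map_hom[OF CAc.dgen_closed Drels])
  interpret DH: group_hom St CA \<delta>
    using d_hom by (simp add: group_hom_def group_hom_axioms_def CA.group_axioms St.group_axioms)
  have d_eval: "\<And>w. \<delta> (pres_class St_rels w) = eval_word CA (dgen CA EC) w"
    unfolding \<delta>_def by (rule CA.pres_map_class[OF CAc.dgen_closed Drels])
  have d_FS: "\<And>g. \<delta> (FS g) = dgen CA EC g"
    by (simp add: FS_def d_eval)
  have d_Sg: "\<And>h. h \<in> Sg \<Longrightarrow> \<delta> h = \<one>\<^bsub>CA\<^esub>"
  proof -
    fix h assume "h \<in> Sg"
    then obtain u v :: 'a where uv: "u dvd 1" "v dvd 1" and hc: "h = pres_class St_rels (c_word u v)"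
      by (auto simp: Sg_def)
    show "\<delta> h = \<one>\<^bsub>CA\<^esub>"
      unfolding hc d_eval st_grp.eval_c[OF Dst] using CAc.dgen_c[OF uv] .
  qed
  have C2_ker: "?C \<subseteq> kernel St CA \<delta>"
    unfolding C2_eq
    by (rule St.generate_subgroup_incl[OF _ DH.subgroup_kernel]) (use Sg_sub d_Sg in \<open>auto simp: kernel_def\<close>)
  have d_C2: "\<And>h. h \<in> ?C \<Longrightarrow> \<delta> h = \<one>\<^bsub>CA\<^esub>"
    using C2_ker by (auto simp: kernel_def)
  define dbar where "dbar = (\<lambda>S. the_elem (\<delta> ` S))"
  have db_coset: "\<And>a. a \<in> carrier St \<Longrightarrow> dbar (?C #>\<^bsub>St\<^esub> a) = \<delta> a"
  proof -
    fix a :: "'a st_gen word set" assume a: "a \<in> carrier St"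
    have "\<delta> ` (?C #>\<^bsub>St\<^esub> a) = {\<delta> a}"
    proof
      show "\<delta> ` (?C #>\<^bsub>St\<^esub> a) \<subseteq> {\<delta> a}"
      proof
        fix y assume "y \<in> \<delta> ` (?C #>\<^bsub>St\<^esub> a)"
        then obtain x where x: "x \<in> ?C #>\<^bsub>St\<^esub> a" and yx: "y = \<delta> x" by (rule imageE)
        from x obtain h where h: "h \<in> ?C" and hx: "x = h \<otimes>\<^bsub>St\<^esub> a"
          unfolding r_coset_def by blast
        have y: "y = \<delta> (h \<otimes>\<^bsub>St\<^esub> a)" using yx hx by simp
        have hc: "h \<in> carrier St" using C2_central[OF h] by simp
        show "y \<in> {\<delta> a}" using y hc a d_C2[OF h] by simp
      qed
    next
      have "\<one>\<^bsub>St\<^esub> \<in> ?C" using subgroup.one_closed[OF C2_sub] .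
      then have "\<one>\<^bsub>St\<^esub> \<otimes>\<^bsub>St\<^esub> a \<in> ?C #>\<^bsub>St\<^esub> a" unfolding r_coset_def by blast
      then have "\<delta> (\<one>\<^bsub>St\<^esub> \<otimes>\<^bsub>St\<^esub> a) \<in> \<delta> ` (?C #>\<^bsub>St\<^esub> a)" by (rule imageI)
      then show "{\<delta> a} \<subseteq> \<delta> ` (?C #>\<^bsub>St\<^esub> a)" using a by simp
    qed
    then show "dbar (?C #>\<^bsub>St\<^esub> a) = \<delta> a" by (simp add: dbar_def)
  qed
  have db_hom: "dbar \<in> hom (St Mod ?C) CA"
  proof (rule homI)
    fix S1 assume "S1 \<in> carrier (St Mod ?C)"
    then obtain a where a: "a \<in> carrier St" and S1: "S1 = ?C #>\<^bsub>St\<^esub> a"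
      unfolding carrier_FactGroup by blast
    show "dbar S1 \<in> carrier CA" unfolding S1 db_coset[OF a] by (rule DH.hom_closed[OF a])
  next
    fix S1 S2 assume "S1 \<in> carrier (St Mod ?C)" "S2 \<in> carrier (St Mod ?C)"
    then obtain a b where a: "a \<in> carrier St" and S1: "S1 = ?C #>\<^bsub>St\<^esub> a"
      and b: "b \<in> carrier St" and S2: "S2 = ?C #>\<^bsub>St\<^esub> b"
      unfolding carrier_FactGroup by blast
    have e: "S1 \<otimes>\<^bsub>St Mod ?C\<^esub> S2 = ?C #>\<^bsub>St\<^esub> (a \<otimes>\<^bsub>St\<^esub> b)"
      unfolding S1 S2 mult_FactGroup by (rule N.rcos_sum[OF a b])
    have "dbar (S1 \<otimes>\<^bsub>St Mod ?C\<^esub> S2) = \<delta> (a \<otimes>\<^bsub>St\<^esub> b)"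
      unfolding e by (rule db_coset) (rule St.m_closed[OF a b])
    also have "\<dots> = \<delta> a \<otimes>\<^bsub>CA\<^esub> \<delta> b" by (rule DH.hom_mult[OF a b])
    also have "\<dots> = dbar S1 \<otimes>\<^bsub>CA\<^esub> dbar S2" unfolding S1 S2 db_coset[OF a] db_coset[OF b] ..
    finally show "dbar (S1 \<otimes>\<^bsub>St Mod ?C\<^esub> S2) = dbar S1 \<otimes>\<^bsub>CA\<^esub> dbar S2" .
  qed
  have left: "\<And>P. P \<in> carrier CA \<Longrightarrow> dbar (\<gamma> P) = P"
  proof -
    fix P :: "'a word set" assume P: "P \<in> carrier CA"
    have h1: "dbar \<circ> \<gamma> \<in> hom (presented_group CA_rels) CA"
      using hom_compose[OF g_hom db_hom] by (simp add: CA_def)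
    have h2: "(\<lambda>x. x) \<in> hom (presented_group CA_rels) (CA :: 'a word set monoid)"
      using id_hom_gen[OF CA.group_axioms] by (simp add: CA_def)
    have gen: "\<And>x. (dbar \<circ> \<gamma>) (pres_class CA_rels (gen x)) = pres_class CA_rels (gen x)"
    proof -
      fix x :: 'a
      have "(dbar \<circ> \<gamma>) (pres_class CA_rels (gen x)) = dbar (Q.gam x)"
        using g_EC[of x] by (simp add: EC_def)
      also have "\<dots> = \<delta> (pres_class St_rels (w_word False (- 1) @ gen (X21 x)))"
        unfolding gam_eq by (rule db_coset) (simp add: St_def)
      also have "\<dots> = Wg CA (dgen CA EC) False (- 1) \<otimes>\<^bsub>CA\<^esub> dgen CA EC (X21 x)"
        by (simp add: d_eval CA.eval_word_append st_grp.eval_w[OF Dst])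
      also have "\<dots> = pres_class CA_rels (gen x)"
        using CAc.dgen_gam[of x] by (simp only: EC_def)
      finally show "(dbar \<circ> \<gamma>) (pres_class CA_rels (gen x)) = pres_class CA_rels (gen x)" .
    qed
    have "(dbar \<circ> \<gamma>) P = P"
      using CA.hom_pres_unique[OF h1 h2 gen] P by (simp add: CA_def)
    then show "dbar (\<gamma> P) = P" by simp
  qed
  have right: "\<And>a. a \<in> carrier St \<Longrightarrow> \<gamma> (\<delta> a) = ?C #>\<^bsub>St\<^esub> a"
  proof -
    fix a assume a: "a \<in> carrier (St :: 'a st_gen word set monoid)"
    have h1: "\<gamma> \<circ> \<delta> \<in> hom (presented_group St_rels) (St Mod ?C)"
      using hom_compose[OF d_hom g_hom] by (simp add: St_def)
    have h2: "(\<lambda>a. ?C #>\<^bsub>St\<^esub> a) \<in> hom (presented_group St_rels) (St Mod ?C)"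
      using pi_hom by (simp add: St_def)
    have gen: "\<And>x. (\<gamma> \<circ> \<delta>) (pres_class St_rels (gen x)) = ?C #>\<^bsub>St\<^esub> pres_class St_rels (gen x)"
    proof -
      fix x :: "'a st_gen"
      have "(\<gamma> \<circ> \<delta>) (pres_class St_rels (gen x)) = \<gamma> (dgen CA EC x)"
        using d_FS[of x] by (simp add: FS_def)
      also have "\<dots> = ?C #>\<^bsub>St\<^esub> FS x"
      proof (cases x)
        case (X12 t)
        have "\<gamma> (dgen CA EC x) = Q.gam (- t) \<otimes>\<^bsub>St Mod ?C\<^esub> inv\<^bsub>St Mod ?C\<^esub> Q.gam 0"
          by (simp add: X12 CAc.dY g_EC)
        also have "\<dots> = ?C #>\<^bsub>St\<^esub> FS x" using Q.GD2[of t] by (simp add: X12)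
        finally show ?thesis .
      next
        case (X21 t)
        have "\<gamma> (dgen CA EC x) = inv\<^bsub>St Mod ?C\<^esub> Q.gam 0 \<otimes>\<^bsub>St Mod ?C\<^esub> Q.gam t"
          by (simp add: X21 CAc.dX g_EC)
        also have "\<dots> = ?C #>\<^bsub>St\<^esub> FS x" using Q.GD1[of t] by (simp add: X21)
        finally show ?thesis .
      qed
      finally show "(\<gamma> \<circ> \<delta>) (pres_class St_rels (gen x)) = ?C #>\<^bsub>St\<^esub> pres_class St_rels (gen x)"
        by (simp add: FS_def)
    qed
    have "(\<gamma> \<circ> \<delta>) a = ?C #>\<^bsub>St\<^esub> a"
      using Q0.hom_pres_unique[OF h1 h2 gen] a by (simp add: St_def)
    then show "\<gamma> (\<delta> a) = ?C #>\<^bsub>St\<^esub> a" by simp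
  qed
  have g_inj: "inj_on \<gamma> (carrier CA)"
    by (rule inj_onI) (metis left)
  have g_surj: "\<gamma> ` carrier CA = carrier (St Mod ?C)"
  proof
    show "\<gamma> ` carrier CA \<subseteq> carrier (St Mod ?C)" using GH.hom_closed by blast
  next
    show "carrier (St Mod ?C) \<subseteq> \<gamma> ` carrier CA"
    proof
      fix S1 assume "S1 \<in> carrier (St Mod ?C)"
      then obtain a where a: "a \<in> carrier St" and S1: "S1 = ?C #>\<^bsub>St\<^esub> a"
        unfolding carrier_FactGroup by blast
      have "\<gamma> (\<delta> a) = S1" using right[OF a] S1 by simp
      moreover have "\<delta> a \<in> carrier CA" using a by simp
      ultimately show "S1 \<in> \<gamma> ` carrier CA" by blast
    qed
  qed
  have iso1: "\<gamma> \<in> iso CA (St Mod ?C)"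
    unfolding iso_def bij_betw_def using g_hom g_inj g_surj by blast
  have gen_eq: "\<forall>a::'a. \<gamma> (pres_class CA_rels (gen a)) = ?C #>\<^bsub>St\<^esub> pres_class St_rels (w_word False (- 1) @ gen (X21 a))"
    using g_EC gam_eq by (simp add: EC_def)
  let ?K = "K2 :: 'a st_gen word set set"
  let ?U = "UA :: 'a word set set"
  interpret SL: group "SL2 :: ('a \<times> 'a \<times> 'a \<times> 'a) monoid" by (rule group_SL2)
  have SLca: "ca_grp (SL2 :: ('a \<times> 'a \<times> 'a \<times> 'a) monoid) eps_mat" by (rule SL2_ca)
  have SLrels: "\<And>l r. (l, r) \<in> CA_rels \<Longrightarrow> eval_word (SL2 :: ('a \<times> 'a \<times> 'a \<times> 'a) monoid) eps_mat l = eval_word SL2 eps_mat r"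
    by (rule ca_grp.ca_rels_hold[OF SLca])
  define \<Psi> where "\<Psi> = pres_map (SL2 :: ('a \<times> 'a \<times> 'a \<times> 'a) monoid) eps_mat"
  have psi_hom: "\<Psi> \<in> hom (CA :: 'a word set monoid) SL2"
    unfolding \<Psi>_def CA_def by (rule SL.pres_map_hom[OF eps_closed SLrels])
  interpret PS: group_hom "CA :: 'a word set monoid" "SL2 :: ('a \<times> 'a \<times> 'a \<times> 'a) monoid" \<Psi>
    using psi_hom by (simp add: group_hom_def group_hom_axioms_def CA.group_axioms SL.group_axioms)
  have psi_EC: "\<And>a. \<Psi> (EC a) = eps_mat a"
    unfolding \<Psi>_def EC_def by (simp add: SL.pres_map_class[OF eps_closed SLrels])
  have inv_eps0: "inv\<^bsub>SL2\<^esub> (eps_mat (0::'a)) = (0, - 1, 1, 0)"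
    unfolding eps_mat_def by (subst SL2_inv) simp_all
  have phi_eq: "\<And>a. a \<in> carrier St \<Longrightarrow> pres_map SL2 phi_gen a = \<Psi> (\<delta> a)"
  proof -
    fix a assume a: "a \<in> carrier (St :: 'a st_gen word set monoid)"
    have h: "\<Psi> \<circ> \<delta> \<in> hom (presented_group St_rels) SL2"
      using hom_compose[OF d_hom psi_hom] by (simp add: St_def)
    have f: "\<And>x. phi_gen x = (\<Psi> \<circ> \<delta>) (pres_class St_rels (gen x))"
    proof -
      fix x :: "'a st_gen"
      have "(\<Psi> \<circ> \<delta>) (pres_class St_rels (gen x)) = \<Psi> (dgen CA EC x)"
        using d_FS[of x] by (simp add: FS_def)
      also have "\<dots> = phi_gen x"
      proof (cases x)
        case (X12 t)
        have "\<Psi> (dgen CA EC x) = eps_mat (- t) \<otimes>\<^bsub>SL2\<^esub> inv\<^bsub>SL2\<^esub> (eps_mat 0)"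
          by (simp add: X12 CAc.dY psi_EC)
        also have "\<dots> = phi_gen x" unfolding inv_eps0 by (simp add: X12 eps_mat_def SL2_mult)
        finally show ?thesis .
      next
        case (X21 t)
        have "\<Psi> (dgen CA EC x) = inv\<^bsub>SL2\<^esub> (eps_mat 0) \<otimes>\<^bsub>SL2\<^esub> eps_mat t"
          by (simp add: X21 CAc.dX psi_EC)
        also have "\<dots> = phi_gen x" unfolding inv_eps0 by (simp add: X21 eps_mat_def SL2_mult)
        finally show ?thesis .
      qed
      finally show "phi_gen x = (\<Psi> \<circ> \<delta>) (pres_class St_rels (gen x))" by simp
    qed
    have "pres_map SL2 phi_gen a = (\<Psi> \<circ> \<delta>) a"
      by (rule SL.pres_map_eq_hom[OF h f]) (use a in \<open>simp add: St_def\<close>)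
    then show "pres_map SL2 phi_gen a = \<Psi> (\<delta> a)" by simp
  qed
  have key: "\<And>P b. P \<in> carrier CA \<Longrightarrow> b \<in> carrier St \<Longrightarrow> \<gamma> P = ?C #>\<^bsub>St\<^esub> b \<Longrightarrow> \<Psi> P = pres_map SL2 phi_gen b"
  proof -
    fix P b assume P: "P \<in> carrier (CA :: 'a word set monoid)" and b: "b \<in> carrier (St :: 'a st_gen word set monoid)"
      and e: "\<gamma> P = ?C #>\<^bsub>St\<^esub> b"
    have "\<delta> b = P" using left[OF P] db_coset[OF b] e by simp
    then show "\<Psi> P = pres_map SL2 phi_gen b" using phi_eq[OF b] by simp
  qed
  have carrK: "carrier ((St\<lparr>carrier := ?K\<rparr>) Mod ?C) = (\<lambda>a. ?C #>\<^bsub>St\<^esub> a) ` ?K"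
    by (auto simp: FactGroup_def RCOSETS_def r_coset_def)
  have multK: "\<And>S1 S2. S1 \<otimes>\<^bsub>(St\<lparr>carrier := ?K\<rparr>) Mod ?C\<^esub> S2 = S1 \<otimes>\<^bsub>St Mod ?C\<^esub> S2"
    by (simp add: FactGroup_def set_mult_def)
  have K_sub: "?K \<subseteq> carrier St" by (auto simp: K2_def)
  have U_sub: "?U \<subseteq> carrier CA" by (auto simp: UA_def)
  have UK: "\<And>P. P \<in> carrier CA \<Longrightarrow> P \<in> ?U \<longleftrightarrow> \<gamma> P \<in> carrier ((St\<lparr>carrier := ?K\<rparr>) Mod ?C)"
  proof -
    fix P assume P: "P \<in> carrier (CA :: 'a word set monoid)"
    show "P \<in> ?U \<longleftrightarrow> \<gamma> P \<in> carrier ((St\<lparr>carrier := ?K\<rparr>) Mod ?C)"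
    proof
      assume "P \<in> ?U"
      then have psi1: "\<Psi> P = \<one>\<^bsub>SL2\<^esub>" by (simp add: UA_def \<Psi>_def)
      have "\<gamma> P \<in> carrier (St Mod ?C)" using P by simp
      then obtain b where b: "b \<in> carrier St" and e: "\<gamma> P = ?C #>\<^bsub>St\<^esub> b"
        unfolding carrier_FactGroup by blast
      have "b \<in> ?K" using key[OF P b e] psi1 b by (simp add: K2_def)
      then show "\<gamma> P \<in> carrier ((St\<lparr>carrier := ?K\<rparr>) Mod ?C)" unfolding carrK e by blast
    next
      assume "\<gamma> P \<in> carrier ((St\<lparr>carrier := ?K\<rparr>) Mod ?C)"
      then obtain b where bK: "b \<in> ?K" and e: "\<gamma> P = ?C #>\<^bsub>St\<^esub> b"
        unfolding carrK by blast
      have b: "b \<in> carrier St" using bK K_sub by blast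
      have "\<Psi> P = \<one>\<^bsub>SL2\<^esub>" using key[OF P b e] bK by (simp add: K2_def)
      then show "P \<in> ?U" using P by (simp add: UA_def \<Psi>_def)
    qed
  qed
  have iso2: "\<gamma> \<in> iso (CA\<lparr>carrier := ?U\<rparr>) ((St\<lparr>carrier := ?K\<rparr>) Mod ?C)"
    unfolding iso_def
  proof (intro CollectI conjI)
    show "\<gamma> \<in> hom (CA\<lparr>carrier := ?U\<rparr>) ((St\<lparr>carrier := ?K\<rparr>) Mod ?C)"
    proof (rule homI)
      fix P assume "P \<in> carrier (CA\<lparr>carrier := ?U\<rparr>)"
      then have "P \<in> ?U" by simp
      then show "\<gamma> P \<in> carrier ((St\<lparr>carrier := ?K\<rparr>) Mod ?C)" using UK U_sub by blast
    next
      fix P P' assume "P \<in> carrier (CA\<lparr>carrier := ?U\<rparr>)" "P' \<in> carrier (CA\<lparr>carrier := ?U\<rparr>)"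
      then have "P \<in> carrier CA" "P' \<in> carrier CA" using U_sub by auto
      then show "\<gamma> (P \<otimes>\<^bsub>CA\<lparr>carrier := ?U\<rparr>\<^esub> P') = \<gamma> P \<otimes>\<^bsub>(St\<lparr>carrier := ?K\<rparr>) Mod ?C\<^esub> \<gamma> P'"
        unfolding multK by simp
    qed
    show "bij_betw \<gamma> (carrier (CA\<lparr>carrier := ?U\<rparr>)) (carrier ((St\<lparr>carrier := ?K\<rparr>) Mod ?C))"
      unfolding bij_betw_def
    proof
      show "inj_on \<gamma> (carrier (CA\<lparr>carrier := ?U\<rparr>))" using inj_on_subset[OF g_inj U_sub] by simp
    next
      show "\<gamma> ` carrier (CA\<lparr>carrier := ?U\<rparr>) = carrier ((St\<lparr>carrier := ?K\<rparr>) Mod ?C)"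
      proof
        show "\<gamma> ` carrier (CA\<lparr>carrier := ?U\<rparr>) \<subseteq> carrier ((St\<lparr>carrier := ?K\<rparr>) Mod ?C)"
          using UK U_sub by auto
      next
        show "carrier ((St\<lparr>carrier := ?K\<rparr>) Mod ?C) \<subseteq> \<gamma> ` carrier (CA\<lparr>carrier := ?U\<rparr>)"
        proof
          fix S1 assume S1: "S1 \<in> carrier ((St\<lparr>carrier := ?K\<rparr>) Mod ?C)"
          then obtain b where bK: "b \<in> ?K" and e: "S1 = ?C #>\<^bsub>St\<^esub> b"
            unfolding carrK by blast
          have "S1 \<in> carrier (St Mod ?C)" using bK K_sub e unfolding carrier_FactGroup by blast
          then obtain P where P: "P \<in> carrier CA" and gP: "S1 = \<gamma> P"
            using g_surj by blast
          have "P \<in> ?U" using UK[OF P] S1 gP by simp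
          then show "S1 \<in> \<gamma> ` carrier (CA\<lparr>carrier := ?U\<rparr>)" using gP by simp
        qed
      qed
    qed
  qed
  show ?thesis using iso1 gen_eq iso2 by blast
qed

end
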